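(* Let $0=t_0<t_1<\dots<t_k=T<\infty$, $\epsilon\in(0,1)$, $\alpha_0\in[\epsilon,1/\epsilon]$ a constant, and for $j=1,\dots,k-1$ let $\alpha_j$ be measurable functions on $\mathfrak N$ with values in $[\epsilon,1/\epsilon]$. Define $$\dot y(N,s)=\alpha_0\mathbf 1_{(0,t_1]}(s)+\sum_{j=1}^{k-1}\alpha_j(N^{t_j})\mathbf 1_{(t_j,t_{j+1}]}(s)+\mathbf 1_{(T,\infty)}(s),$$ where $N^{a}$ denotes $N$ stopped at time $a$. Then the map $\mathbf Y$ is invertible (both left and right invertible with respect to $\pi$).
   Context: $\mathfrak N$ denotes the set of locally finite simple configurations on $(0,\infty)$, identified with counting paths; $N$ is the canonical process, $\pi$ the unit rate Poisson law. $y(N,t)=\int_0^t\dot y(N,s)ds$, $y^*(N,t)=\inf\{s:y(N,s)>t\}$, and $\mathbf Y:\mathfrak N\to\mathfrak N$ is $N\mapsto Y$ with $Y(t)=N(y^*(N,t))$. $\mathbf Y$ is left invertible if $\mathbf Y^\#\pi\ll\pi$ and there is a measurable $\mathbb Z$ with $\mathbb Z\circ\mathbf Y=\mathrm{Id}$ $\pi$-a.s.; right invertible if there is a measurable $\mathbb Z$ with $\mathbb Z^\#\pi\ll\pi$ and $\mathbf Y\circ\mathbb Z=\mathrm{Id}$ $\pi$-a.s.; invertible if both. *)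

theory Defs
  imports "HOL-Probability.Probability"
begin

text \<open>Configurations on (0,oo): locally finite (simple) subsets of (0,oo).
  The counting path of a configuration N is cnt N t = #(N \<inter> (0,t]).\<close>

definition nconf :: "real set set" where
  "nconf = {N. N \<subseteq> {0<..} \<and> (\<forall>t. finite (N \<inter> {0<..t}))}"

definition cnt :: "real set \<Rightarrow> real \<Rightarrow> nat" where
  "cnt N t = card (N \<inter> {0<..t})"

definition Nspace :: "real set measure" where
  "Nspace = sigma nconf {{N \<in> nconf. cnt N t = n} | t n. True}"

text \<open>Unit rate Poisson law: points are partial sums of iid Exp(1) variables.\<close>
definition arrivals :: "(nat \<Rightarrow> real) \<Rightarrow> real set" where
  "arrivals x = (if (\<forall>i. 0 < x i) \<and> filterlim (\<lambda>n. \<Sum>i\<le>n. x i) at_top sequentially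
                 then range (\<lambda>n. \<Sum>i\<le>n. x i) else {})"

definition poisson :: "real set measure" where
  "poisson = distr (PiM UNIV (\<lambda>_::nat. density lborel (exponential_density 1))) Nspace arrivals"

text \<open>Configuration whose counting path is F (the jump times of F).\<close>
definition conf_of :: "(real \<Rightarrow> nat) \<Rightarrow> real set" where
  "conf_of F = {t. 0 < t \<and> eventually (\<lambda>s. F s < F t) (at_left t)}"

definition stopped :: "real set \<Rightarrow> real \<Rightarrow> real set" where
  "stopped N a = N \<inter> {0<..a}"

definition ydot :: "(nat \<Rightarrow> real) \<Rightarrow> nat \<Rightarrow> real \<Rightarrow> (nat \<Rightarrow> real set \<Rightarrow> real)
                     \<Rightarrow> real set \<Rightarrow> real \<Rightarrow> real" where
  "ydot tt k a0 al N s =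
     a0 * indicator {0<..tt 1} s
     + (\<Sum>j\<in>{1..<k}. al j (stopped N (tt j)) * indicator {tt j<..tt (Suc j)} s)
     + indicator {tt k<..} s"

definition ytime :: "(nat \<Rightarrow> real) \<Rightarrow> nat \<Rightarrow> real \<Rightarrow> (nat \<Rightarrow> real set \<Rightarrow> real)
                     \<Rightarrow> real set \<Rightarrow> real \<Rightarrow> real" where
  "ytime tt k a0 al N t = integral {0..t} (ydot tt k a0 al N)"

definition ystar :: "(nat \<Rightarrow> real) \<Rightarrow> nat \<Rightarrow> real \<Rightarrow> (nat \<Rightarrow> real set \<Rightarrow> real)
                     \<Rightarrow> real set \<Rightarrow> real \<Rightarrow> real" where
  "ystar tt k a0 al N t = Inf {s. 0 \<le> s \<and> ytime tt k a0 al N s > t}"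

definition Ymap :: "(nat \<Rightarrow> real) \<Rightarrow> nat \<Rightarrow> real \<Rightarrow> (nat \<Rightarrow> real set \<Rightarrow> real)
                     \<Rightarrow> real set \<Rightarrow> real set" where
  "Ymap tt k a0 al N = conf_of (\<lambda>t. cnt N (ystar tt k a0 al N t))"

definition left_invertible :: "(real set \<Rightarrow> real set) \<Rightarrow> bool" where
  "left_invertible Y \<longleftrightarrow> Y \<in> Nspace \<rightarrow>\<^sub>M Nspace
     \<and> absolutely_continuous poisson (distr poisson Nspace Y)
     \<and> (\<exists>Z \<in> Nspace \<rightarrow>\<^sub>M Nspace. AE N in poisson. Z (Y N) = N)"

definition right_invertible :: "(real set \<Rightarrow> real set) \<Rightarrow> bool" where
  "right_invertible Y \<longleftrightarrow>
     (\<exists>Z \<in> Nspace \<rightarrow>\<^sub>M Nspace. absolutely_continuous poisson (distr poisson Nspace Z)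
        \<and> (AE N in poisson. Y (Z N) = N))"

definition invertible :: "(real set \<Rightarrow> real set) \<Rightarrow> bool" where
  "invertible Y \<longleftrightarrow> left_invertible Y \<and> right_invertible Y"

end

theory Submission
  imports Defs
begin

lemma Nspace_gen_Pow: "{{N \<in> nconf. cnt N t = n} | t n. True} \<subseteq> Pow nconf"
  by auto

lemma space_Nspace[simp]: "space Nspace = nconf"
  unfolding Nspace_def using Nspace_gen_Pow by (rule space_measure_of)

lemma sets_Nspace: "sets Nspace = sigma_sets nconf {{N \<in> nconf. cnt N t = n} | t n. True}"
  unfolding Nspace_def using Nspace_gen_Pow by (rule sets_measure_of)

lemma nconfD: "N \<in> nconf \<Longrightarrow> N \<subseteq> {0<..}" "N \<in> nconf \<Longrightarrow> finite (N \<inter> {0<..t})"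
  by (auto simp: nconf_def)

lemma nconfI: "N \<subseteq> {0<..} \<Longrightarrow> (\<And>t. finite (N \<inter> {0<..t})) \<Longrightarrow> N \<in> nconf"
  by (auto simp: nconf_def)

lemma measurable_NspaceI:
  assumes "\<And>x. x \<in> space M \<Longrightarrow> f x \<in> nconf"
    and "\<And>t n. {x \<in> space M. cnt (f x) t = n} \<in> sets M"
  shows "f \<in> M \<rightarrow>\<^sub>M Nspace"
  unfolding Nspace_def
proof (rule measurable_measure_of[OF Nspace_gen_Pow])
  show "f \<in> space M \<rightarrow> nconf" using assms(1) by auto
  fix y assume "y \<in> {{N \<in> nconf. cnt N t = n} | t n. True}"
  then obtain t n where y: "y = {N \<in> nconf. cnt N t = n}" by auto
  have "f -` y \<inter> space M = {x \<in> space M. cnt (f x) t = n}" using assms(1) y by auto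
  then show "f -` y \<inter> space M \<in> sets M" using assms(2) by simp
qed

lemma measurable_cnt_nat[measurable]: "(\<lambda>N. cnt N t) \<in> Nspace \<rightarrow>\<^sub>M count_space UNIV"
proof (subst measurable_count_space_eq2_countable, safe)
  fix n :: nat
  have "(\<lambda>N. cnt N t) -` {n} \<inter> space Nspace = {N \<in> nconf. cnt N t = n}" by auto
  also have "\<dots> \<in> sets Nspace" unfolding sets_Nspace by (rule sigma_sets.Basic) blast
  finally show "(\<lambda>N. cnt N t) -` {n} \<inter> space Nspace \<in> sets Nspace" .
qed auto

lemma measurable_cnt_real[measurable]: "(\<lambda>N. real (cnt N t)) \<in> borel_measurable Nspace"
  by measurable

lemma cnt_mono: "N \<in> nconf \<Longrightarrow> s \<le> t \<Longrightarrow> cnt N s \<le> cnt N t"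
  unfolding cnt_def by (rule card_mono) (auto simp: nconf_def)

lemma cnt_nonpos: "t \<le> 0 \<Longrightarrow> cnt N t = 0"
  unfolding cnt_def by (subgoal_tac "N \<inter> {0<..t} = {}") auto

lemma cnt_right_cont:
  assumes N: "N \<in> nconf"
  shows "\<exists>d>0. \<forall>q. s \<le> q \<and> q < s + d \<longrightarrow> cnt N q = cnt N s"
proof -
  define F where "F = N \<inter> {s<..s+1}"
  have fin: "finite F" unfolding F_def
    using nconfD(1)[OF N] by (intro finite_subset[OF _ nconfD(2)[OF N, of "s+1"]]) auto
  define d where "d = Min (insert 1 ((\<lambda>p. p - s) ` F))"
  have dpos: "d > 0" unfolding d_def using fin by (subst Min_gr_iff) (auto simp: F_def)
  have dle: "\<And>p. p \<in> F \<Longrightarrow> d \<le> p - s" unfolding d_def using fin by (intro Min_le) auto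
  have "\<forall>q. s \<le> q \<and> q < s + d \<longrightarrow> cnt N q = cnt N s"
  proof (intro allI impI)
    fix q assume q: "s \<le> q \<and> q < s + d"
    have d1: "d \<le> 1" unfolding d_def using fin by (intro Min_le) auto
    have "N \<inter> {0<..q} = N \<inter> {0<..s}"
    proof safe
      fix p assume p: "p \<in> N" "p \<in> {0<..q}"
      show "p \<in> {0<..s}"
      proof (rule ccontr)
        assume "p \<notin> {0<..s}"
        then have "p \<in> F" using p q d1 by (auto simp: F_def)
        then have "d \<le> p - s" by (rule dle)
        then show False using p q by auto
      qed
    qed (use q in auto)
    then show "cnt N q = cnt N s" by (simp add: cnt_def)
  qed
  then show ?thesis using dpos by blast
qed

lemma cnt_le_iff_rat:
  assumes N: "N \<in> nconf"
  shows "cnt N s \<le> n \<longleftrightarrow> (\<exists>q\<in>\<rat>. s < q \<and> cnt N q \<le> n)"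
proof
  assume "cnt N s \<le> n"
  obtain d where d: "d > 0" "\<And>q. s \<le> q \<and> q < s + d \<Longrightarrow> cnt N q = cnt N s"
    using cnt_right_cont[OF N] by blast
  obtain q where q: "q \<in> \<rat>" "s < q" "q < s + d" using Rats_dense_in_real[of s "s+d"] d(1) by auto
  then show "\<exists>q\<in>\<rat>. s < q \<and> cnt N q \<le> n" using d(2)[of q] \<open>cnt N s \<le> n\<close> by auto
next
  assume "\<exists>q\<in>\<rat>. s < q \<and> cnt N q \<le> n"
  then obtain q where "s < q" "cnt N q \<le> n" by auto
  then show "cnt N s \<le> n" using cnt_mono[OF N, of s q] by simp
qed

lemma measurable_cnt_comp_le:
  assumes f[measurable]: "f \<in> M \<rightarrow>\<^sub>M Nspace" and g[measurable]: "g \<in> borel_measurable M"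
  shows "{x \<in> space M. cnt (f x) (g x) \<le> n} \<in> sets M"
proof -
  have fx: "x \<in> space M \<Longrightarrow> f x \<in> nconf" for x
    using measurable_space[OF f] by auto
  have "{x \<in> space M. cnt (f x) (g x) \<le> n} = (\<Union>q\<in>\<rat>. {x \<in> space M. g x < q \<and> cnt (f x) q \<le> n})"
    using cnt_le_iff_rat[OF fx] by auto
  also have "\<dots> \<in> sets M"
    by (intro sets.countable_UN'' countable_rat) measurable
  finally show ?thesis .
qed

lemma measurable_cnt_comp[measurable (raw)]:
  assumes f: "f \<in> M \<rightarrow>\<^sub>M Nspace" and g: "g \<in> borel_measurable M"
  shows "(\<lambda>x. cnt (f x) (g x)) \<in> M \<rightarrow>\<^sub>M count_space UNIV"
proof (subst measurable_count_space_eq2_countable, safe)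
  fix n :: nat
  have "(\<lambda>x. cnt (f x) (g x)) -` {n} \<inter> space M =
    {x \<in> space M. cnt (f x) (g x) \<le> n} - (if n = 0 then {} else {x \<in> space M. cnt (f x) (g x) \<le> n - 1})"
    by auto
  also have "\<dots> \<in> sets M"
    using measurable_cnt_comp_le[OF f g] by (intro sets.Diff) auto
  finally show "(\<lambda>x. cnt (f x) (g x)) -` {n} \<inter> space M \<in> sets M" .
qed auto

lemma measurable_cnt_comp_real[measurable (raw)]:
  assumes f: "f \<in> M \<rightarrow>\<^sub>M Nspace" and g: "g \<in> borel_measurable M"
  shows "(\<lambda>x. real (cnt (f x) (g x))) \<in> borel_measurable M"
  using measurable_cnt_comp[OF f g] by (rule measurable_compose) simp

lemma measurable_NspaceI2:
  assumes "\<And>x. x \<in> space M \<Longrightarrow> f x \<in> nconf"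
    and "\<And>t. (\<lambda>x. cnt (f x) t) \<in> M \<rightarrow>\<^sub>M count_space UNIV"
  shows "f \<in> M \<rightarrow>\<^sub>M Nspace"
proof (rule measurable_NspaceI[OF assms(1)])
  fix t n
  have "{x \<in> space M. cnt (f x) t = n} = (\<lambda>x. cnt (f x) t) -` {n} \<inter> space M" by auto
  then show "{x \<in> space M. cnt (f x) t = n} \<in> sets M"
    using measurable_sets[OF assms(2), of "{n}"] by simp
qed

lemma stopped_nconf: "N \<in> nconf \<Longrightarrow> stopped N a \<in> nconf"
  unfolding stopped_def nconf_def by (auto intro: finite_subset)

lemma cnt_stopped: "cnt (stopped N a) t = cnt N (min a t)"
  unfolding cnt_def stopped_def
  by (rule arg_cong[where f=card]) auto

lemma measurable_stopped[measurable]: "(\<lambda>N. stopped N a) \<in> Nspace \<rightarrow>\<^sub>M Nspace"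
  by (rule measurable_NspaceI2) (auto simp: stopped_nconf cnt_stopped)

lemma measurable_stopped_comp[measurable (raw)]:
  "f \<in> M \<rightarrow>\<^sub>M Nspace \<Longrightarrow> (\<lambda>x. stopped (f x) a) \<in> M \<rightarrow>\<^sub>M Nspace"
  by (rule measurable_compose[OF _ measurable_stopped])


definition EXP :: "real measure" where "EXP = density lborel (exponential_density 1)"
abbreviation SS :: "real stream measure" where "SS \<equiv> stream_space EXP"

lemma prob_EXP: "prob_space EXP"
  unfolding EXP_def by (rule prob_space_exponential_density) simp

lemma space_Ex[simp]: "space EXP = UNIV" and sets_Ex[simp, measurable_cong]: "sets EXP = sets borel"
  by (auto simp: EXP_def)

lemma space_SS[simp]: "space SS = UNIV"
  by (simp add: space_stream_space)

lemma stream_eqI_snth: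
  assumes "\<And>n. s !! n = t !! n" shows "s = t"
proof -
  have "snth s = snth t" using assms by blast
  then show ?thesis by (subst stream_smap_nats[of s], subst stream_smap_nats[of t]) simp
qed

definition NP :: "(real \<Rightarrow> real) \<Rightarrow> bool" where
  "NP g \<longleftrightarrow> g \<in> borel_measurable borel \<and> (\<forall>B \<in> null_sets EXP. g -` B \<in> null_sets EXP)"

lemma NP_AE:
  assumes "NP g" "AE x in EXP. Q x"
  shows "AE t in EXP. Q (g t)"
proof -
  obtain B where B: "{x \<in> space EXP. \<not> Q x} \<subseteq> B" "B \<in> null_sets EXP"
    using assms(2) unfolding eventually_ae_filter by auto
  have "g -` B \<in> null_sets EXP" using assms(1) B(2) by (auto simp: NP_def)
  then show ?thesis
    by (rule AE_I'[where N="g -` B"]) (use B(1) in auto)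
qed

definition Tri :: "(real stream \<Rightarrow> real stream) \<Rightarrow> bool" where
  "Tri \<Phi> \<longleftrightarrow> (\<forall>n (x::real stream) y. stake n x = stake n y \<longrightarrow> stake n (\<Phi> x) = stake n (\<Phi> y))"

definition NPc :: "(real stream \<Rightarrow> real stream) \<Rightarrow> bool" where
  "NPc \<Phi> \<longleftrightarrow> (\<forall>(l::real list) (xs::real stream). NP (\<lambda>v. \<Phi> (l @- v ## xs) !! length l))"

lemma Tri_head:
  assumes "Tri \<Phi>" shows "shd (\<Phi> (t ## xs)) = shd (\<Phi> (t ## ys))"
  using assms[unfolded Tri_def, rule_format, of 1 "t ## xs" "t ## ys"] by simp

lemma Tri_tail:
  assumes "Tri \<Phi>" shows "Tri (\<lambda>xs. stl (\<Phi> (t ## xs)))"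
  unfolding Tri_def
proof (intro allI impI)
  fix n and xs ys :: "real stream" assume "stake n xs = stake n ys"
  then have "stake (Suc n) (t ## xs) = stake (Suc n) (t ## ys)" by simp
  then have "stake (Suc n) (\<Phi> (t ## xs)) = stake (Suc n) (\<Phi> (t ## ys))"
    using assms unfolding Tri_def by blast
  then show "stake n (stl (\<Phi> (t ## xs))) = stake n (stl (\<Phi> (t ## ys)))"
    by simp
qed

lemma NPc_tail:
  assumes "NPc \<Phi>" shows "NPc (\<lambda>xs. stl (\<Phi> (t ## xs)))"
  unfolding NPc_def
proof (intro allI)
  fix l xs
  have "NP (\<lambda>v. \<Phi> ((t # l) @- v ## xs) !! length (t # l))" using assms unfolding NPc_def by blast
  then show "NP (\<lambda>v. stl (\<Phi> (t ## l @- v ## xs)) !! length l)" by simp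
qed

lemma NPc_head: "NPc \<Phi> \<Longrightarrow> NP (\<lambda>v. shd (\<Phi> (v ## xs)))"
  unfolding NPc_def by (drule spec[of _ "[]"]) simp

lemma qi_trunc:
  assumes "\<Phi> \<in> SS \<rightarrow>\<^sub>M SS" "\<And>x. sdrop m (\<Phi> x) = sdrop m x" "Tri \<Phi>" "NPc \<Phi>"
    and P[measurable]: "Measurable.pred SS P" and ae: "AE X in SS. P X"
  shows "AE X in SS. P (\<Phi> X)"
  using assms
proof (induction m arbitrary: \<Phi> P)
  case 0
  then show ?case by simp
next
  case (Suc m)
  interpret EXP: prob_space EXP by (rule prob_EXP)
  note [measurable] = Suc.prems(1) Suc.prems(5)
  define g where "g t = shd (\<Phi> (t ## sconst 0))" for t
  have NPg: "NP g" unfolding g_def by (rule NPc_head[OF Suc.prems(4)])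
  have split: "\<Phi> (t ## X) = g t ## stl (\<Phi> (t ## X))" for t X
    using Tri_head[OF Suc.prems(3)] unfolding g_def by (metis stream.collapse)
  have "AE x in EXP. AE X in SS. P (x ## X)"
    using Suc.prems(6) by (subst (asm) EXP.AE_stream_space) auto
  then have "AE t in EXP. AE X in SS. P (g t ## X)" by (rule NP_AE[OF NPg])
  then have "AE t in EXP. AE X in SS. P (\<Phi> (t ## X))"
  proof eventually_elim
    case (elim t)
    then have h: "AE X in SS. P (g t ## X)" .
    have "AE X in SS. P (g t ## stl (\<Phi> (t ## X)))"
    proof (rule Suc.IH[where P="\<lambda>X. P (g t ## X)"])
      show "(\<lambda>xs. stl (\<Phi> (t ## xs))) \<in> SS \<rightarrow>\<^sub>M SS" by measurable
      show "sdrop m (stl (\<Phi> (t ## x))) = sdrop m x" for x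
        using Suc.prems(2)[of "t ## x"] by simp
      show "Tri (\<lambda>xs. stl (\<Phi> (t ## xs)))" by (rule Tri_tail[OF Suc.prems(3)])
      show "NPc (\<lambda>xs. stl (\<Phi> (t ## xs)))" by (rule NPc_tail[OF Suc.prems(4)])
      show "Measurable.pred SS (\<lambda>X. P (g t ## X))" by measurable
      show "AE X in SS. P (g t ## X)" by (rule h)
    qed
    then show "AE X in SS. P (\<Phi> (t ## X))" by (subst split) 
  qed
  then show ?case by (subst EXP.AE_stream_space) auto
qed

lemma qi_full:
  assumes Phi[measurable]: "\<Phi> \<in> SS \<rightarrow>\<^sub>M SS" and tri: "Tri \<Phi>" and npc: "NPc \<Phi>"
    and ev: "AE X in SS. \<exists>m. \<forall>n\<ge>m. \<Phi> X !! n = X !! n"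
    and P[measurable]: "Measurable.pred SS P" and ae: "AE X in SS. P X"
  shows "AE X in SS. P (\<Phi> X)"
proof -
  define \<Phi>m where "\<Phi>m m X = stake m (\<Phi> X) @- sdrop m X" for m X
  have snth_m: "\<Phi>m m X !! n = (if n < m then \<Phi> X !! n else X !! n)" for m X n
    unfolding \<Phi>m_def by (simp add: shift_snth sdrop_snth)
  have "AE X in SS. P (\<Phi>m m X)" for m
  proof (rule qi_trunc[OF _ _ _ _ P ae])
    show "\<Phi>m m \<in> SS \<rightarrow>\<^sub>M SS" unfolding \<Phi>m_def by (rule measurable_shift[OF Phi measurable_sdrop])
    show "sdrop m (\<Phi>m m x) = sdrop m x" for x unfolding \<Phi>m_def by (simp add: sdrop_shift)
    show "Tri (\<Phi>m m)" unfolding Tri_def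
    proof (intro allI impI)
      fix n and x y :: "real stream" assume h: "stake n x = stake n y"
      have s: "stake n (\<Phi> x) = stake n (\<Phi> y)" using tri h unfolding Tri_def by blast
      have "\<Phi>m m x !! i = \<Phi>m m y !! i" if "i < n" for i
      proof -
        have "\<Phi> x !! i = \<Phi> y !! i" using arg_cong[OF s, of "\<lambda>l. l ! i"] that by simp
        moreover have "x !! i = y !! i" using arg_cong[OF h, of "\<lambda>l. l ! i"] that by simp
        ultimately show ?thesis by (simp add: snth_m)
      qed
      then show "stake n (\<Phi>m m x) = stake n (\<Phi>m m y)"
        by (intro nth_equalityI) (auto simp: stake_nth)
    qed
    show "NPc (\<Phi>m m)" unfolding NPc_def
    proof (intro allI)
      fix l xs
      show "NP (\<lambda>v. \<Phi>m m (l @- v ## xs) !! length l)"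
      proof (cases "length l < m")
        case True
        then show ?thesis using npc unfolding NPc_def by (simp add: snth_m)
      next
        case False
        then show ?thesis by (simp add: snth_m NP_def)
      qed
    qed
  qed
  then have "AE X in SS. \<forall>m. P (\<Phi>m m X)" by (simp add: AE_all_countable)
  then show ?thesis using ev
  proof eventually_elim
    case (elim X)
    then obtain m where m: "\<forall>n\<ge>m. \<Phi> X !! n = X !! n" by auto
    have "\<Phi> X = \<Phi>m m X" by (rule stream_eqI_snth) (use m in \<open>auto simp: snth_m\<close>)
    then show ?case using elim by simp
  qed
qed


definition S :: "real stream \<Rightarrow> nat \<Rightarrow> real" where "S x n = (\<Sum>i\<le>n. x !! i)"
definition goodS :: "real stream \<Rightarrow> bool" where
  "goodS x \<longleftrightarrow> (\<forall>i. 0 < x !! i) \<and> (\<forall>M::nat. \<exists>n. real M \<le> S x n)"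
definition cfg :: "real stream \<Rightarrow> real set" where "cfg x = arrivals (snth x)"

lemma S_Suc: "S x (Suc n) = S x n + x !! Suc n"
  by (simp add: S_def)

lemma S_0: "S x 0 = x !! 0" by (simp add: S_def)

lemma S_strict_mono:
  assumes "\<forall>i. 0 < x !! i" shows "strict_mono (S x)"
proof (rule strict_monoI_Suc)
  fix n
  have "0 < x !! Suc n" using assms by blast
  then show "S x n < S x (Suc n)" by (simp add: S_Suc del: snth.simps)
qed

lemma S_pos: "\<forall>i. 0 < x !! i \<Longrightarrow> 0 < S x n"
  unfolding S_def by (rule sum_pos) auto

lemma filterlim_S_iff:
  assumes pos: "\<forall>i. 0 < x !! i"
  shows "filterlim (\<lambda>n. \<Sum>i\<le>n. x !! i) at_top sequentially \<longleftrightarrow> (\<forall>M::nat. \<exists>n. real M \<le> S x n)"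
proof
  assume "filterlim (\<lambda>n. \<Sum>i\<le>n. x !! i) at_top sequentially"
  then have "\<forall>Z. eventually (\<lambda>n. Z \<le> S x n) sequentially" unfolding filterlim_at_top S_def .
  then show "\<forall>M::nat. \<exists>n. real M \<le> S x n"
    by (metis eventually_sequentially order_refl)
next
  assume h: "\<forall>M::nat. \<exists>n. real M \<le> S x n"
  have mono: "mono (S x)" using S_strict_mono[OF pos] by (rule strict_mono_mono)
  have "\<forall>Z. eventually (\<lambda>n. Z \<le> S x n) sequentially"
  proof
    fix Z :: real
    obtain M :: nat where "Z \<le> real M" using real_arch_simple by blast
    moreover obtain n0 where "real M \<le> S x n0" using h by blast
    ultimately have "\<forall>n\<ge>n0. Z \<le> S x n" using mono by (meson monoD order_trans)
    then show "eventually (\<lambda>n. Z \<le> S x n) sequentially" by (auto simp: eventually_sequentially)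
  qed
  then show "filterlim (\<lambda>n. \<Sum>i\<le>n. x !! i) at_top sequentially" unfolding filterlim_at_top S_def .
qed

lemma cfg_eq: "cfg x = (if goodS x then range (S x) else {})"
proof (cases "\<forall>i. 0 < x !! i")
  case True
  then show ?thesis unfolding cfg_def arrivals_def goodS_def
    using filterlim_S_iff[OF True] by (auto simp: S_def)
next
  case False
  then show ?thesis unfolding cfg_def arrivals_def goodS_def by auto
qed

lemma goodS_finite_le:
  assumes "goodS x" shows "finite {n. S x n \<le> t}"
proof -
  obtain M :: nat where M: "t < real M" using reals_Archimedean2 by blast
  obtain n0 where n0: "real M \<le> S x n0" using assms unfolding goodS_def by blast
  have mono: "mono (S x)" using assms unfolding goodS_def by (intro strict_mono_mono S_strict_mono) auto
  have "{n. S x n \<le> t} \<subseteq> {..<n0}"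
  proof
    fix n assume "n \<in> {n. S x n \<le> t}"
    then have "S x n \<le> t" by simp
    then show "n \<in> {..<n0}" using M n0 monoD[OF mono, of n0 n] by (cases "n0 \<le> n") auto
  qed
  then show ?thesis by (rule finite_subset) simp
qed

lemma cfg_nconf: "cfg x \<in> nconf"
proof (cases "goodS x")
  case True
  have pos: "\<forall>i. 0 < x !! i" using True unfolding goodS_def by simp
  show ?thesis unfolding cfg_eq using True
  proof (simp, intro nconfI)
    show "range (S x) \<subseteq> {0<..}" using S_pos[OF pos] by auto
    fix t
    have "range (S x) \<inter> {0<..t} \<subseteq> S x ` {n. S x n \<le> t}" by auto
    then show "finite (range (S x) \<inter> {0<..t})"
      using goodS_finite_le[OF True] by (meson finite_imageI finite_subset)
  qed
next
  case False
  then show ?thesis unfolding cfg_eq by (simp add: nconf_def)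
qed

lemma cnt_cfg_ge:
  assumes g: "goodS x"
  shows "m \<le> cnt (cfg x) t \<longleftrightarrow> m = 0 \<or> S x (m - 1) \<le> t"
proof -
  have pos: "\<forall>i. 0 < x !! i" using g unfolding goodS_def by simp
  have sm: "strict_mono (S x)" by (rule S_strict_mono[OF pos])
  define A where "A = {n. S x n \<le> t}"
  have finA: "finite A" unfolding A_def by (rule goodS_finite_le[OF g])
  have down: "n \<in> A \<Longrightarrow> k \<le> n \<Longrightarrow> k \<in> A" for n k
    unfolding A_def using strict_mono_less_eq[OF sm, of k n] by auto
  have "cfg x \<inter> {0<..t} = S x ` A" unfolding cfg_eq A_def using g S_pos[OF pos] by auto
  then have c: "cnt (cfg x) t = card A"
    unfolding cnt_def using card_image[OF strict_mono_imp_inj_on[OF sm]] by simp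
  show ?thesis
  proof (cases "m = 0")
    case False
    show ?thesis
    proof
      assume "m \<le> cnt (cfg x) t"
      show "m = 0 \<or> S x (m - 1) \<le> t"
      proof (rule ccontr)
        assume "\<not> (m = 0 \<or> S x (m - 1) \<le> t)"
        then have "m - 1 \<notin> A" unfolding A_def by simp
        have "A \<subseteq> {..<m - 1}"
        proof
          fix n assume "n \<in> A"
          show "n \<in> {..<m - 1}"
          proof (rule ccontr)
            assume "n \<notin> {..<m - 1}"
            then have "m - 1 \<le> n" by simp
            then have "m - 1 \<in> A" using down[OF \<open>n \<in> A\<close>] by blast
            then show False using \<open>m - 1 \<notin> A\<close> by blast
          qed
        qed
        then have "card A \<le> card {..<m - 1}" by (intro card_mono) auto
        then have "card A \<le> m - 1" by simp
        then show False using \<open>m \<le> cnt (cfg x) t\<close> c False by simp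
      qed
    next
      assume "m = 0 \<or> S x (m - 1) \<le> t"
      then have "m - 1 \<in> A" using False unfolding A_def by simp
      have "{..<m} \<subseteq> A"
      proof
        fix k assume "k \<in> {..<m}"
        then have "k \<le> m - 1" by simp
        then show "k \<in> A" using down[OF \<open>m - 1 \<in> A\<close>] by blast
      qed
      then have "card {..<m} \<le> card A" by (rule card_mono[OF finA])
      then show "m \<le> cnt (cfg x) t" using c by simp
    qed
  qed simp
qed

lemma measurable_S[measurable]: "(\<lambda>x. S x n) \<in> borel_measurable SS"
  unfolding S_def by measurable

lemma measurable_goodS[measurable]: "Measurable.pred SS goodS"
  unfolding goodS_def by measurable

lemma measurable_cfg[measurable]: "cfg \<in> SS \<rightarrow>\<^sub>M Nspace"
proof (rule measurable_NspaceI2)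
  show "cfg x \<in> nconf" for x by (rule cfg_nconf)
  fix t
  have ge1: "m \<le> cnt (cfg x) t \<longleftrightarrow> (goodS x \<and> (m = 0 \<or> S x (m - 1) \<le> t)) \<or> (\<not> goodS x \<and> m = 0)" for m x
  proof (cases "goodS x")
    case True
    then show ?thesis using cnt_cfg_ge[OF True] by simp
  next
    case False
    then have "cfg x = {}" by (simp add: cfg_eq)
    then show ?thesis using False by (simp add: cnt_def)
  qed
  have ge: "{x \<in> space SS. m \<le> cnt (cfg x) t} =
      {x \<in> space SS. (goodS x \<and> (m = 0 \<or> S x (m - 1) \<le> t)) \<or> (\<not> goodS x \<and> m = 0)}" for m
    using ge1 by blast
  have ge_meas: "{x \<in> space SS. m \<le> cnt (cfg x) t} \<in> sets SS" for m
    unfolding ge by measurable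
  show "(\<lambda>x. cnt (cfg x) t) \<in> SS \<rightarrow>\<^sub>M count_space UNIV"
  proof (subst measurable_count_space_eq2_countable, safe)
    fix n :: nat
    have "(\<lambda>x. cnt (cfg x) t) -` {n} \<inter> space SS =
        {x \<in> space SS. n \<le> cnt (cfg x) t} - {x \<in> space SS. Suc n \<le> cnt (cfg x) t}" by auto
    then show "(\<lambda>x. cnt (cfg x) t) -` {n} \<inter> space SS \<in> sets SS" using ge_meas by auto
  qed auto
qed

lemma poisson_eq: "poisson = distr SS Nspace cfg"
proof -
  have "distr SS Nspace cfg = distr (\<Pi>\<^sub>M i\<in>UNIV. EXP) Nspace (cfg \<circ> to_stream)"
    by (subst stream_space_eq_distr) (rule distr_distr; measurable)
  also have "cfg \<circ> to_stream = arrivals"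
  proof
    fix X :: "nat \<Rightarrow> real"
    have "snth (to_stream X) = X" by (auto simp: to_stream_def fun_eq_iff)
    then show "(cfg \<circ> to_stream) X = arrivals X" by (simp add: cfg_def)
  qed
  finally show ?thesis unfolding poisson_def EXP_def by simp
qed

lemma AE_pos_EXP: "AE x in EXP. 0 < x"
proof -
  have "AE x in lborel. x \<noteq> (0::real)" by (rule AE_lborel_singleton)
  then have "AE x in lborel. 0 < exponential_density 1 x \<longrightarrow> 0 < x"
    by eventually_elim (auto simp: exponential_density_def)
  then show ?thesis unfolding EXP_def by (subst AE_density) auto
qed

lemma sdrop_dist:
  assumes [measurable]: "Measurable.pred SS P" and "AE x in SS. P x"
  shows "AE x in SS. P (sdrop m x)"
  using assms(2)
proof (induction m)
  case (Suc m)
  interpret EXP: prob_space EXP by (rule prob_EXP)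
  show ?case
    by (subst EXP.AE_stream_space) (use Suc in auto)
qed simp

lemma lt1_null: "AE x in SS. \<not> (\<forall>i. x !! i < 1)"
proof -
  interpret EXP: prob_space EXP by (rule prob_EXP)
  interpret SSp: prob_space SS by (rule EXP.prob_space_stream_space)
  define B where "B = {x \<in> space SS. \<forall>i. x !! i < 1}"
  have Bm[measurable]: "B \<in> sets SS" unfolding B_def by measurable
  have pos1: "emeasure EXP {1..} > 0"
  proof -
    have "emeasure EXP {1..} = (\<integral>\<^sup>+ x. indicator {1..} x * ennreal (exponential_density 1 x) \<partial>lborel)"
      unfolding EXP_def by (subst emeasure_density) (auto simp: mult.commute)
    moreover have "(\<integral>\<^sup>+ x. indicator {1..} x * ennreal (exponential_density 1 x) \<partial>lborel) \<noteq> 0"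
    proof
      assume "(\<integral>\<^sup>+ x. indicator {1..} x * ennreal (exponential_density 1 x) \<partial>lborel) = 0"
      then have "AE x in lborel. indicator {1..} x * ennreal (exponential_density 1 x) = 0"
        by (subst (asm) nn_integral_0_iff_AE) auto
      then have "AE x in lborel. (x::real) \<notin> {1..}"
        by (rule eventually_mono) (auto simp: exponential_density_def indicator_def split: if_splits)
      then have "emeasure lborel {1::real..} = 0"
        by (subst (asm) AE_iff_measurable[OF _ refl]) (auto simp: atLeast_def)
      moreover have "emeasure lborel {1::real..2} \<le> emeasure lborel {1::real..}"
        by (rule emeasure_mono) auto
      ultimately show False by simp
    qed
    ultimately show ?thesis by (simp add: zero_less_iff_neq_zero)
  qed
  define q where "q = measure EXP {..<1}"
  have q: "q < 1"
  proof -
    have "measure EXP {1..} > 0" using pos1 by (simp add: EXP.emeasure_eq_measure)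
    moreover have "measure EXP (space EXP - {1..}) = 1 - measure EXP {1..}"
      by (rule EXP.prob_compl) simp
    moreover have "space EXP - {1..} = {..<1::real}" by auto
    ultimately show ?thesis unfolding q_def by simp
  qed
  have q0: "0 \<le> q" unfolding q_def by simp
  have eq: "emeasure SS B = emeasure EXP {..<1} * emeasure SS B"
  proof -
    have "emeasure SS B = (\<integral>\<^sup>+ t. emeasure SS {x \<in> space SS. t ## x \<in> B} \<partial>EXP)"
      by (rule EXP.emeasure_stream_space[OF Bm])
    also have "\<dots> = (\<integral>\<^sup>+ t. indicator {..<1} t * emeasure SS B \<partial>EXP)"
    proof (rule nn_integral_cong)
      fix t :: real
      have iff: "(\<forall>i. (t ## x) !! i < 1) \<longleftrightarrow> t < 1 \<and> (\<forall>i. x !! i < 1)" for x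
      proof
        assume h: "\<forall>i. (t ## x) !! i < 1"
        have "t < 1" using h[rule_format, of 0] by simp
        moreover have "x !! i < 1" for i using h[rule_format, of "Suc i"] by simp
        ultimately show "t < 1 \<and> (\<forall>i. x !! i < 1)" by blast
      next
        assume h: "t < 1 \<and> (\<forall>i. x !! i < 1)"
        show "\<forall>i. (t ## x) !! i < 1"
        proof
          fix i show "(t ## x) !! i < 1" using h by (cases i) auto
        qed
      qed
      have "{x \<in> space SS. t ## x \<in> B} = (if t < 1 then B else {})"
        unfolding B_def using iff by auto
      then show "emeasure SS {x \<in> space SS. t ## x \<in> B} = indicator {..<1} t * emeasure SS B"
        by (auto simp: indicator_def)
    qed
    also have "\<dots> = emeasure EXP {..<1} * emeasure SS B"
      by (subst nn_integral_multc) auto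
    finally show ?thesis .
  qed
  have "measure SS B = q * measure SS B"
    using eq unfolding q_def
    by (simp add: SSp.emeasure_eq_measure EXP.emeasure_eq_measure ennreal_mult'[symmetric])
  then have "(1 - q) * measure SS B = 0" by (simp add: algebra_simps)
  then have "measure SS B = 0" using q by simp
  then have "emeasure SS B = 0" by (simp add: SSp.emeasure_eq_measure)
  then show ?thesis
    by (subst AE_iff_measurable[OF Bm]) (auto simp: B_def)
qed

lemma AE_goodS: "AE x in SS. goodS x"
proof -
  interpret EXP: prob_space EXP by (rule prob_EXP)
  have "AE x in SS. stream_all (\<lambda>x. 0 < x) x" by (rule EXP.AE_stream_all[OF _ AE_pos_EXP]) simp
  then have pos: "AE x in SS. \<forall>i. 0 < x !! i"
    by (rule eventually_mono) (simp add: stream_all_def)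
  have "AE x in SS. \<not> (\<forall>i. sdrop m x !! i < 1)" for m
    by (rule sdrop_dist[OF _ lt1_null]) measurable
  then have inf: "AE x in SS. \<forall>m. \<exists>i. 1 \<le> x !! (m + i)"
    by (subst AE_all_countable) (auto simp: sdrop_snth not_less)
  show ?thesis using pos inf
  proof eventually_elim
    case (elim x)
    have "\<exists>n. real M \<le> S x n" for M
    proof (induction M)
      case 0 then show ?case using S_pos[OF elim(1)] less_imp_le by auto
    next
      case (Suc M)
      then obtain n where n: "real M \<le> S x n" by blast
      obtain i where i: "1 \<le> x !! (Suc n + i)" using elim(2) by blast
      have "S x n \<le> S x (n + i)"
        using strict_mono_less_eq[OF S_strict_mono[OF elim(1)]] by simp
      moreover have "S x (Suc (n + i)) = S x (n + i) + x !! Suc (n + i)" by (rule S_Suc)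
      ultimately have "real (Suc M) \<le> S x (Suc (n + i))" using n i by simp
      then show ?case by blast
    qed
    then show "goodS x" using elim(1) unfolding goodS_def by blast
  qed
qed

lemma poisson_ac:
  assumes F: "F \<in> Nspace \<rightarrow>\<^sub>M Nspace"
    and Phi: "\<Phi> \<in> SS \<rightarrow>\<^sub>M SS" "Tri \<Phi>" "NPc \<Phi>" "AE X in SS. \<exists>m. \<forall>n\<ge>m. \<Phi> X !! n = X !! n"
    and rel: "AE x in SS. F (cfg x) = cfg (\<Phi> x)"
  shows "absolutely_continuous poisson (distr poisson Nspace F)"
  unfolding absolutely_continuous_def
proof
  fix A assume A: "A \<in> null_sets poisson"
  have As[measurable]: "A \<in> sets Nspace" using A unfolding poisson_eq null_sets_def by simp
  have "emeasure (distr SS Nspace cfg) A = 0" using A unfolding poisson_eq by (simp add: null_sets_def)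
  then have e0: "emeasure SS (cfg -` A \<inter> space SS) = 0"
    by (simp only: emeasure_distr[OF measurable_cfg As])
  have eqv: "cfg -` A \<inter> space SS = {x \<in> space SS. cfg x \<in> A}" by auto
  have cA: "{x \<in> space SS. cfg x \<in> A} \<in> sets SS"
    using measurable_sets[OF measurable_cfg As] unfolding eqv .
  have ae1: "AE x in SS. cfg x \<notin> A"
    using e0 unfolding eqv by (subst AE_iff_measurable[OF cA]) auto
  have "AE x in SS. cfg (\<Phi> x) \<notin> A"
    by (rule qi_full[OF Phi, where P="\<lambda>x. cfg x \<notin> A"]) (use ae1 in auto)
  then have ae2: "AE x in SS. F (cfg x) \<notin> A" using rel by eventually_elim simp
  have FA: "F -` A \<inter> space Nspace \<in> sets Nspace" by (rule measurable_sets[OF F As])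
  have eqv2: "cfg -` (F -` A \<inter> space Nspace) \<inter> space SS = {x \<in> space SS. F (cfg x) \<in> A}"
    using cfg_nconf by auto
  have cFA: "{x \<in> space SS. F (cfg x) \<in> A} \<in> sets SS"
    using measurable_sets[OF measurable_cfg FA] unfolding eqv2 .
  have "emeasure SS {x \<in> space SS. F (cfg x) \<in> A} = 0"
    using ae2 by (subst (asm) AE_iff_measurable[OF cFA]) auto
  then have e3: "emeasure poisson (F -` A \<inter> space Nspace) = 0"
    unfolding poisson_eq by (simp only: emeasure_distr[OF measurable_cfg FA] eqv2)
  have Fp: "F \<in> poisson \<rightarrow>\<^sub>M Nspace"
    using F by (simp add: poisson_eq)
  have "emeasure (distr poisson Nspace F) A = emeasure poisson (F -` A \<inter> space poisson)"
    by (rule emeasure_distr[OF Fp As])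
  also have "space poisson = space Nspace" by (simp add: poisson_eq)
  finally have "emeasure (distr poisson Nspace F) A = 0" using e3 by simp
  then show "A \<in> null_sets (distr poisson Nspace F)" using As by (simp add: null_sets_def)
qed


definition phi :: "real \<Rightarrow> real \<Rightarrow> real \<Rightarrow> real \<Rightarrow> real" where
  "phi a c d s = (if s \<le> a then s else if s \<le> a + d then a + c * (s - a) else s + (c - 1) * d)"

lemma measurable_phi[measurable]:
  assumes [measurable]: "a \<in> borel_measurable M" "c \<in> borel_measurable M" "d \<in> borel_measurable M"
    "s \<in> borel_measurable M"
  shows "(\<lambda>x. phi (a x) (c x) (d x) (s x)) \<in> borel_measurable M"
  unfolding phi_def by measurable

lemma phi_le: "s \<le> a \<Longrightarrow> phi a c d s = s"
  by (simp add: phi_def)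

lemma phi_big: "0 \<le> d \<Longrightarrow> a + d \<le> s \<Longrightarrow> phi a c d s = s + (c - 1) * d"
  by (auto simp: phi_def algebra_simps)

lemma phi_cases:
  assumes c: "0 < c" and d: "0 \<le> d"
  shows "u \<le> a \<Longrightarrow> phi a c d u = u"
    and "a < u \<Longrightarrow> u \<le> a + d \<Longrightarrow> a < phi a c d u \<and> phi a c d u \<le> a + c * d"
    and "a + d < u \<Longrightarrow> phi a c d u = a + c * d + (u - a - d)"
proof -
  show "u \<le> a \<Longrightarrow> phi a c d u = u" by (simp add: phi_def)
  assume "a < u" "u \<le> a + d"
  then have "0 < c * (u - a)" "c * (u - a) \<le> c * d" using c by (simp, intro mult_left_mono, auto)
  then show "a < phi a c d u \<and> phi a c d u \<le> a + c * d" using \<open>a < u\<close> \<open>u \<le> a + d\<close>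
    by (simp add: phi_def)
next
  assume "a + d < u"
  then show "phi a c d u = a + c * d + (u - a - d)" using d by (simp add: phi_def algebra_simps)
qed

lemma phi_gt: "0 < c \<Longrightarrow> 0 \<le> d \<Longrightarrow> a < s \<Longrightarrow> a < phi a c d s"
proof -
  assume c: "0 < c" and d: "0 \<le> d" and s: "a < s"
  have cd: "0 \<le> c * d" using c d by simp
  show "a < phi a c d s"
  proof (cases "s \<le> a + d")
    case True then show ?thesis using phi_cases(2)[OF c d s] by simp
  next
    case False then show ?thesis using phi_cases(3)[OF c d, of a s] cd by simp
  qed
qed

lemma phi_strict_mono:
  assumes c: "0 < c" and d: "0 \<le> d" and st: "s < t"
  shows "phi a c d s < phi a c d t"
proof -
  have cd: "0 \<le> c * d" using c d by simp
  have mid: "phi a c d s < phi a c d t" if "a < s" "t \<le> a + d"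
  proof -
    have "c * (s - a) < c * (t - a)" using c st by simp
    then show ?thesis using that st by (simp add: phi_def)
  qed
  consider "t \<le> a" | "s \<le> a" "a < t" | "a < s" "t \<le> a + d" | "a < s" "s \<le> a + d" "a + d < t"
    | "a + d < s"
    using st by linarith
  then show ?thesis
  proof cases
    case 1 then show ?thesis using st by (simp add: phi_def)
  next
    case 2 then show ?thesis using phi_gt[OF c d 2(2)] phi_cases(1)[OF c d 2(1)] by simp
  next
    case 3 then show ?thesis by (rule mid)
  next
    case 4 then show ?thesis using phi_cases(2)[OF c d 4(1,2)] phi_cases(3)[OF c d 4(3)] by simp
  next
    case 5 then show ?thesis using phi_cases(3)[OF c d 5] phi_cases(3)[OF c d, of a t] st by simp
  qed
qed

lemma phi_mono: "0 < c \<Longrightarrow> 0 \<le> d \<Longrightarrow> s \<le> t \<Longrightarrow> phi a c d s \<le> phi a c d t"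
  using phi_strict_mono[of c d s t a] by (cases "s = t") auto

lemma phi_inv:
  assumes c: "0 < c" and d: "0 \<le> d"
  shows "phi a (1 / c) (c * d) (phi a c d s) = s"
proof -
  consider "s \<le> a" | "a < s" "s \<le> a + d" | "a + d < s" by linarith
  then show ?thesis
  proof cases
    case 1 then show ?thesis by (simp add: phi_def)
  next
    case 2
    then have p: "phi a c d s = a + c * (s - a)" by (simp add: phi_def)
    have "a < a + c * (s - a)" using 2 c by simp
    moreover have "a + c * (s - a) \<le> a + c * d" using 2 c by simp
    ultimately show ?thesis unfolding p using c by (simp add: phi_def field_simps)
  next
    case 3
    then have p: "phi a c d s = s + (c - 1) * d" using d by (simp add: phi_def)
    have "a + c * d \<le> s + (c - 1) * d" using 3 by (simp add: algebra_simps)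
    then have "phi a (1 / c) (c * d) (s + (c - 1) * d) = s + (c - 1) * d + (1 / c - 1) * (c * d)"
      by (intro phi_big) (use c d in auto)
    also have "\<dots> = s" using c by (simp add: field_simps)
    finally show ?thesis unfolding p .
  qed
qed

lemma phi_inv2:
  assumes c: "0 < c" and d: "0 \<le> d"
  shows "phi a c d (phi a (1 / c) (c * d) t) = t"
proof -
  have "phi a (1 / (1 / c)) ((1 / c) * (c * d)) (phi a (1 / c) (c * d) t) = t"
    by (rule phi_inv) (use c d in auto)
  then show ?thesis using c by simp
qed

lemma phi_0: "0 \<le> a \<Longrightarrow> phi a c d 0 = 0"
  by (simp add: phi_def)

lemma image_nconf:
  assumes N: "N \<in> nconf" and mono: "\<And>s t. s < t \<Longrightarrow> h s < h t" and h0: "h 0 = 0"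
    and inv: "\<And>s. g (h s) = s" "\<And>t. h (g t) = t"
  shows "h ` N \<in> nconf" "cnt (h ` N) t = cnt N (g t)"
proof -
  have mono_iff: "h s \<le> h t \<longleftrightarrow> s \<le> t" for s t
  proof
    assume "h s \<le> h t"
    show "s \<le> t"
    proof (rule ccontr)
      assume "\<not> s \<le> t"
      then have "h t < h s" using mono by simp
      then show False using \<open>h s \<le> h t\<close> by simp
    qed
  next
    assume "s \<le> t" then show "h s \<le> h t" using mono[of s t] by (cases "s = t") auto
  qed
  have pos_iff: "0 < h p \<longleftrightarrow> 0 < p" for p using mono_iff[of p 0] h0 by (simp add: not_le[symmetric])
  have le_iff: "h p \<le> t \<longleftrightarrow> p \<le> g t" for p t using mono_iff[of p "g t"] inv(2)[of t] by simp
  have eq: "h ` N \<inter> {0<..t} = h ` (N \<inter> {0<..g t})" for t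
  proof (rule set_eqI)
    fix y
    show "y \<in> h ` N \<inter> {0<..t} \<longleftrightarrow> y \<in> h ` (N \<inter> {0<..g t})"
      using pos_iff le_iff by auto
  qed
  have inj: "inj h" using mono by (metis inv(1) injI)
  show "h ` N \<in> nconf"
  proof (rule nconfI)
    show "h ` N \<subseteq> {0<..}" using nconfD(1)[OF N] mono[of 0] h0 by auto
    fix t show "finite (h ` N \<inter> {0<..t})" unfolding eq using nconfD(2)[OF N] by simp
  qed
  show "cnt (h ` N) t = cnt N (g t)"
    unfolding cnt_def eq by (rule card_image) (rule inj_on_subset[OF inj], simp)
qed

lemma phi_image:
  assumes N: "N \<in> nconf" and a: "0 \<le> a" and c: "0 < c" and d: "0 \<le> d"
  shows "phi a c d ` N \<in> nconf" "cnt (phi a c d ` N) t = cnt N (phi a (1/c) (c * d) t)"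
  using image_nconf[OF N, of "phi a c d" "phi a (1/c) (c*d)"] phi_strict_mono[OF c d] phi_0[OF a]
    phi_inv[OF c d] phi_inv2[OF c d] by auto

lemma null_EXP_iff: "B \<in> null_sets EXP \<longleftrightarrow> B \<in> sets borel \<and> (AE x in lborel. x \<in> B \<longrightarrow> x < 0)"
proof -
  have m: "(\<lambda>x. ennreal (exponential_density 1 x)) \<in> borel_measurable lborel"
    by (simp add: exponential_density_def)
  have "(AE x in lborel. x \<in> B \<longrightarrow> ennreal (exponential_density 1 x) = 0) \<longleftrightarrow>
        (AE x in lborel. x \<in> B \<longrightarrow> x < 0)"
    by (intro AE_cong) (auto simp: exponential_density_def)
  then show ?thesis unfolding EXP_def null_sets_density_iff[OF m] by simp
qed

lemma AE_lborel_affine: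
  fixes Q :: "real \<Rightarrow> bool"
  assumes al: "\<alpha> \<noteq> 0" and Qm[measurable]: "Measurable.pred borel Q" and ae: "AE u in lborel. Q u"
  shows "AE v in lborel. Q (\<beta> + \<alpha> * v)"
proof -
  have "AE v in distr lborel borel (\<lambda>x. - \<beta> / \<alpha> + (1 / \<alpha>) * x). Q (\<beta> + \<alpha> * v)"
  proof (subst AE_distr_iff)
    show "AE x in lborel. Q (\<beta> + \<alpha> * (- \<beta> / \<alpha> + 1 / \<alpha> * x))"
      using ae al by (simp add: field_simps)
  qed measurable
  then have A: "AE v in density (distr lborel borel (\<lambda>x. - \<beta> / \<alpha> + (1 / \<alpha>) * x)) (\<lambda>_. ennreal \<bar>1 / \<alpha>\<bar>).
      Q (\<beta> + \<alpha> * v)"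
    by (subst AE_density) (auto elim: eventually_mono)
  have eq: "lborel = density (distr lborel borel (\<lambda>x. - \<beta> / \<alpha> + (1 / \<alpha>) * x)) (\<lambda>_. ennreal \<bar>1 / \<alpha>\<bar>)"
    by (rule lborel_real_affine) (use al in simp)
  show ?thesis apply (subst eq) by (rule A)
qed

lemma NP_id: "NP (\<lambda>v. v)"
  by (simp add: NP_def)

lemma NP_phi_shift:
  assumes p: "0 \<le> p" and c: "0 < c" and d: "0 \<le> d"
  shows "NP (\<lambda>v. phi a c d (p + v) - phi a c d p)"
  unfolding NP_def
proof safe
  show "(\<lambda>v. phi a c d (p + v) - phi a c d p) \<in> borel_measurable borel" by measurable
  fix B assume B: "B \<in> null_sets EXP"
  have Bs[measurable]: "B \<in> sets borel" and aeB: "AE x in lborel. x \<in> B \<longrightarrow> x < 0"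
    using B unfolding null_EXP_iff by auto
  define f where "f v = phi a c d (p + v) - phi a c d p" for v
  have fm[measurable]: "f \<in> borel_measurable borel" unfolding f_def by measurable
  define Q where "Q u = (u \<in> B \<longrightarrow> u < 0)" for u :: real
  have Qm[measurable]: "Measurable.pred borel Q" unfolding Q_def by measurable
  have Q: "AE u in lborel. Q u" using aeB unfolding Q_def .
  define k1 where "k1 = p - phi a c d p"
  define k2 where "k2 = a + c * (p - a) - phi a c d p"
  define k3 where "k3 = p + (c - 1) * d - phi a c d p"
  have A1: "AE v in lborel. Q (k1 + 1 * v)" by (rule AE_lborel_affine[OF _ Qm Q]) simp
  have A2: "AE v in lborel. Q (k2 + c * v)" by (rule AE_lborel_affine[OF _ Qm Q]) (use c in simp)
  have A3: "AE v in lborel. Q (k3 + 1 * v)" by (rule AE_lborel_affine[OF _ Qm Q]) simp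
  have "AE v in lborel. v \<in> f -` B \<longrightarrow> v < 0"
    using A1 A2 A3
  proof eventually_elim
    case (elim v)
    show ?case
    proof (intro impI)
      assume vB: "v \<in> f -` B"
      show "v < 0"
      proof (rule ccontr)
        assume "\<not> v < 0"
        then have v0: "0 \<le> v" by simp
        have fpos: "0 \<le> f v" unfolding f_def using phi_mono[OF c d, of p "p + v" a] v0 by simp
        have "f v = k1 + 1 * v \<or> f v = k2 + c * v \<or> f v = k3 + 1 * v"
          unfolding f_def k1_def k2_def k3_def phi_def[of a c d "p + v"] by (auto simp: algebra_simps)
        then have "Q (f v)" using elim by auto
        then show False using vB fpos unfolding Q_def by auto
      qed
    qed
  qed
  moreover have "f -` B \<in> sets borel" using measurable_sets[OF fm Bs] by simp
  ultimately show "(\<lambda>v. phi a c d (p + v) - phi a c d p) -` B \<in> null_sets EXP"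
    unfolding null_EXP_iff f_def by simp
qed


lemma card_image_lessThan_Suc:
  fixes F :: "nat \<Rightarrow> 'a" and n :: nat
  shows "card ((\<lambda>i. F i) ` {..<Suc n} \<inter> J) =
   card ((\<lambda>i. F i) ` {..<n} \<inter> J) + (if F n \<in> J \<and> (\<forall>i<n. F i \<noteq> F n) then 1 else 0)"
proof -
  have e: "(\<lambda>i. F i) ` {..<Suc n} \<inter> J =
    (if F n \<in> J then insert (F n) ((\<lambda>i. F i) ` {..<n} \<inter> J) else (\<lambda>i. F i) ` {..<n} \<inter> J)"
    by (auto simp: lessThan_Suc)
  have h1: "F n \<in> F ` {..<n} \<longleftrightarrow> (\<exists>i<n. F i = F n)"
    by (metis (mono_tags) imageE imageI lessThan_iff)
  then have "F n \<in> (\<lambda>i. F i) ` {..<n} \<inter> J \<longleftrightarrow> F n \<in> J \<and> \<not> (\<forall>i<n. F i \<noteq> F n)" by auto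
  then show ?thesis unfolding e by (simp add: card_insert_if) (use h1 in blast)
qed

lemma measurable_card_finset:
  fixes F :: "nat \<Rightarrow> 'a \<Rightarrow> real" and n :: nat
  assumes F[measurable]: "\<And>i. F i \<in> borel_measurable M"
  shows "(\<lambda>x. real (card ((\<lambda>i. F i x) ` {..<n} \<inter> {0<..t}))) \<in> borel_measurable M"
proof (induction n)
  case 0 then show ?case by simp
next
  case (Suc n)
  note [measurable] = Suc
  have "(\<lambda>x. real (card ((\<lambda>i. F i x) ` {..<Suc n} \<inter> {0<..t}))) =
    (\<lambda>x. real (card ((\<lambda>i. F i x) ` {..<n} \<inter> {0<..t})) +
       real (if F n x \<in> {0<..t} \<and> (\<forall>i<n. F i x \<noteq> F n x) then 1 else 0))"
    by (simp add: card_image_lessThan_Suc[of "\<lambda>i. F i _"])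
  also have "\<dots> \<in> borel_measurable M" by measurable
  finally show ?case .
qed

lemma measurable_finset:
  fixes F :: "nat \<Rightarrow> 'a \<Rightarrow> real" and n :: nat
  assumes F[measurable]: "\<And>i. F i \<in> borel_measurable M"
  shows "(\<lambda>x. (\<lambda>i. F i x) ` {..<n} \<inter> {0<..}) \<in> M \<rightarrow>\<^sub>M Nspace"
proof (rule measurable_NspaceI)
  show "(\<lambda>i. F i x) ` {..<n} \<inter> {0<..} \<in> nconf" for x
    by (rule nconfI) (auto intro!: finite_Int disjI1)
  fix t m
  have c: "cnt ((\<lambda>i. F i x) ` {..<n} \<inter> {0<..}) t = card ((\<lambda>i. F i x) ` {..<n} \<inter> {0<..t})" for x
    unfolding cnt_def by (rule arg_cong[where f=card]) auto
  have [measurable]: "(\<lambda>x. real (card ((\<lambda>i. F i x) ` {..<n} \<inter> {0<..t}))) \<in> borel_measurable M"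
    by (rule measurable_card_finset[OF F])
  have "{x \<in> space M. cnt ((\<lambda>i. F i x) ` {..<n} \<inter> {0<..}) t = m} =
        {x \<in> space M. real (card ((\<lambda>i. F i x) ` {..<n} \<inter> {0<..t})) = real m}"
    unfolding c by simp
  also have "\<dots> \<in> sets M" by measurable
  finally show "{x \<in> space M. cnt ((\<lambda>i. F i x) ` {..<n} \<inter> {0<..}) t = m} \<in> sets M" .
qed

definition stepok :: "real \<Rightarrow> real \<Rightarrow> real \<Rightarrow> (real set \<Rightarrow> real) \<Rightarrow> (real set \<Rightarrow> real) \<Rightarrow> bool" where
  "stepok a e D c d \<longleftrightarrow> 0 \<le> a \<and> 0 < e \<and> c \<in> borel_measurable Nspace \<and> d \<in> borel_measurable Nspace \<and>
     (\<forall>N\<in>nconf. e \<le> c N \<and> c N \<le> 1 / e \<and> 0 \<le> d N \<and> d N \<le> D \<and>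
        c N = c (stopped N a) \<and> d N = d (stopped N a))"

definition Step :: "real \<Rightarrow> (real set \<Rightarrow> real) \<Rightarrow> (real set \<Rightarrow> real) \<Rightarrow> real set \<Rightarrow> real set" where
  "Step a c d N = phi a (c N) (d N) ` N"

context
  fixes a e D :: real and c d :: "real set \<Rightarrow> real"
  assumes ok: "stepok a e D c d"
begin

lemma ok_a: "0 \<le> a" and ok_e: "0 < e" and ok_cm[measurable]: "c \<in> borel_measurable Nspace"
  and ok_dm[measurable]: "d \<in> borel_measurable Nspace"
  using ok by (auto simp: stepok_def)

lemma ok_N:
  assumes "N \<in> nconf"
  shows "e \<le> c N" "c N \<le> 1 / e" "0 \<le> d N" "d N \<le> D" "c N = c (stopped N a)" "d N = d (stopped N a)"
    "0 < c N"
  using ok assms by (auto simp: stepok_def intro: less_le_trans[OF ok_e])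

lemma Step_nconf: "N \<in> nconf \<Longrightarrow> Step a c d N \<in> nconf"
  unfolding Step_def using phi_image(1) ok_a ok_N by blast

lemma cnt_Step: "N \<in> nconf \<Longrightarrow> cnt (Step a c d N) t = cnt N (phi a (1 / c N) (c N * d N) t)"
  unfolding Step_def using phi_image(2) ok_a ok_N by blast

lemma measurable_Step[measurable]: "Step a c d \<in> Nspace \<rightarrow>\<^sub>M Nspace"
proof (rule measurable_NspaceI2)
  show "Step a c d x \<in> nconf" if "x \<in> space Nspace" for x using that Step_nconf by simp
  fix t
  have "(\<lambda>N. cnt N (phi a (1 / c N) (c N * d N) t)) \<in> Nspace \<rightarrow>\<^sub>M count_space UNIV"
    by (rule measurable_cnt_comp[OF measurable_ident_sets[OF refl]]) measurable
  then show "(\<lambda>N. cnt (Step a c d N) t) \<in> Nspace \<rightarrow>\<^sub>M count_space UNIV"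
    by (rule measurable_cong[THEN iffD1, rotated]) (simp add: cnt_Step)
qed

lemma stopped_Step: "N \<in> nconf \<Longrightarrow> stopped (Step a c d N) a = stopped N a"
proof -
  assume N: "N \<in> nconf"
  have cd: "0 < c N" "0 \<le> d N" using ok_N[OF N] by auto
  show ?thesis unfolding stopped_def Step_def
  proof (rule set_eqI)
    fix y
    show "y \<in> phi a (c N) (d N) ` N \<inter> {0<..a} \<longleftrightarrow> y \<in> N \<inter> {0<..a}"
    proof
      assume "y \<in> phi a (c N) (d N) ` N \<inter> {0<..a}"
      then obtain p where p: "p \<in> N" "y = phi a (c N) (d N) p" "0 < y" "y \<le> a" by auto
      have "p \<le> a" using phi_gt[OF cd, of a p] p by (cases "p \<le> a") auto
      then show "y \<in> N \<inter> {0<..a}" using p phi_le by auto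
    next
      assume "y \<in> N \<inter> {0<..a}"
      then show "y \<in> phi a (c N) (d N) ` N \<inter> {0<..a}"
        using phi_le[of y a "c N" "d N"] by (auto intro!: image_eqI[of y _ y])
    qed
  qed
qed

lemma Step_params: "N \<in> nconf \<Longrightarrow> c (Step a c d N) = c N \<and> d (Step a c d N) = d N"
  using ok_N[OF Step_nconf] ok_N stopped_Step by metis

lemma Step_inv: "N \<in> nconf \<Longrightarrow> Step a (\<lambda>N. 1 / c N) (\<lambda>N. c N * d N) (Step a c d N) = N"
proof -
  assume N: "N \<in> nconf"
  have cd: "0 < c N" "0 \<le> d N" using ok_N[OF N] by auto
  have p: "c (Step a c d N) = c N" "d (Step a c d N) = d N" using Step_params[OF N] by auto
  have "Step a (\<lambda>N. 1 / c N) (\<lambda>N. c N * d N) (Step a c d N) = phi a (1 / c N) (c N * d N) ` Step a c d N"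
    by (simp only: Step_def[of a "\<lambda>N. 1 / c N" "\<lambda>N. c N * d N" "Step a c d N"] p)
  also have "\<dots> = N" unfolding Step_def image_image phi_inv[OF cd] by simp
  finally show ?thesis .
qed

lemma stepok_inv: "stepok a e (D / e) (\<lambda>N. 1 / c N) (\<lambda>N. c N * d N)"
  unfolding stepok_def
proof (intro conjI ballI)
  show "0 \<le> a" "0 < e" by (rule ok_a, rule ok_e)
  show "(\<lambda>N. 1 / c N) \<in> borel_measurable Nspace" "(\<lambda>N. c N * d N) \<in> borel_measurable Nspace" by measurable
  fix N assume N: "N \<in> nconf"
  note h = ok_N[OF N]
  have e: "0 < e" by (rule ok_e)
  have c1: "e \<le> c N" "c N \<le> 1 / e" "0 < c N" using h by auto
  show "e \<le> 1 / c N" using c1 e by (simp add: field_simps)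
  show "1 / c N \<le> 1 / e" using c1 e by (simp add: field_simps)
  show "0 \<le> c N * d N" using h by simp
  have "c N * d N \<le> (1 / e) * D" by (rule mult_mono) (use h e in auto)
  then show "c N * d N \<le> D / e" by simp
  show "1 / c N = 1 / c (stopped N a)" "c N * d N = c (stopped N a) * d (stopped N a)"
    using h by auto
qed

end

lemma Step_cong: "c N = c' N \<Longrightarrow> d N = d' N \<Longrightarrow> Step a c d N = Step a c' d' N"
  by (simp add: Step_def)

lemma Step_inv2:
  assumes ok: "stepok a e D c d" and N: "N \<in> nconf"
  shows "Step a c d (Step a (\<lambda>N. 1 / c N) (\<lambda>N. c N * d N) N) = N"
proof -
  note ok' = stepok_inv[OF ok]
  let ?M = "Step a (\<lambda>N. 1 / c N) (\<lambda>N. c N * d N) N"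
  have M: "?M \<in> nconf" by (rule Step_nconf[OF ok' N])
  have "0 < c ?M" using ok_N[OF ok M] by simp
  then have "Step a c d ?M = Step a (\<lambda>N. 1 / (1 / c N)) (\<lambda>N. (1 / c N) * (c N * d N)) ?M"
    by (intro Step_cong) auto
  also have "\<dots> = N" by (rule Step_inv[OF ok' N])
  finally show ?thesis .
qed


definition prevS :: "real stream \<Rightarrow> nat \<Rightarrow> real" where "prevS x n = (\<Sum>i<n. x !! i)"
definition pcS :: "real stream \<Rightarrow> nat \<Rightarrow> real set" where "pcS x n = (\<lambda>i. S x i) ` {..<n} \<inter> {0<..}"
definition hco :: "real \<Rightarrow> (real set \<Rightarrow> real) \<Rightarrow> (real set \<Rightarrow> real) \<Rightarrow> real set \<Rightarrow> real \<Rightarrow> real \<Rightarrow> real" where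
  "hco a c d C p v = (if 0 \<le> p then phi a (c C) (d C) (p + v) - phi a (c C) (d C) p else v)"
definition Psi :: "real \<Rightarrow> (real set \<Rightarrow> real) \<Rightarrow> (real set \<Rightarrow> real) \<Rightarrow> real stream \<Rightarrow> real stream" where
  "Psi a c d x = to_stream (\<lambda>n. hco a c d (pcS x n) (prevS x n) (x !! n))"

lemma snth_to_stream: "to_stream f !! n = f n"
  by (simp add: to_stream_def)

lemma Psi_snth: "Psi a c d x !! n = hco a c d (pcS x n) (prevS x n) (x !! n)"
  by (simp add: Psi_def snth_to_stream)

lemma prevS_Suc: "prevS x (Suc n) = S x n"
  by (simp add: prevS_def S_def lessThan_Suc_atMost)

lemma prevS_0: "prevS x 0 = 0" by (simp add: prevS_def)

lemma S_prevS: "S x n = prevS x n + x !! n"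
  by (simp add: prevS_def S_def lessThan_Suc_atMost[symmetric])

lemma prefix_eq:
  assumes "\<And>j. j < n \<Longrightarrow> x !! j = y !! j"
  shows "prevS x n = prevS y n" "pcS x n = pcS y n"
proof -
  show "prevS x n = prevS y n" unfolding prevS_def using assms by (intro sum.cong) auto
  have "S x j = S y j" if "j < n" for j unfolding S_def using assms that by (intro sum.cong) auto
  then show "pcS x n = pcS y n" unfolding pcS_def by (intro arg_cong2[where f="(\<inter>)"] image_cong) auto
qed

lemma pcS_nconf: "pcS x n \<in> nconf"
  unfolding pcS_def by (rule nconfI) (auto intro!: finite_Int disjI1)

lemma measurable_prevS[measurable]: "(\<lambda>x. prevS x n) \<in> borel_measurable SS"
  unfolding prevS_def by measurable

lemma measurable_pcS[measurable]: "(\<lambda>x. pcS x n) \<in> SS \<rightarrow>\<^sub>M Nspace"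
  unfolding pcS_def by (rule measurable_finset) measurable

context
  fixes a e D :: real and c d :: "real set \<Rightarrow> real"
  assumes ok: "stepok a e D c d"
begin

lemma measurable_Psi: "Psi a c d \<in> SS \<rightarrow>\<^sub>M SS"
proof (rule measurable_stream_space2)
  fix n
  note [measurable] = ok_cm[OF ok] ok_dm[OF ok]
  have "(\<lambda>x. hco a c d (pcS x n) (prevS x n) (x !! n)) \<in> borel_measurable SS"
    unfolding hco_def by measurable
  then show "(\<lambda>x. Psi a c d x !! n) \<in> SS \<rightarrow>\<^sub>M EXP"
    by (simp add: Psi_snth measurable_cong_sets[OF refl sets_Ex])
qed

lemma Tri_Psi: "Tri (Psi a c d)"
  unfolding Tri_def
proof (intro allI impI)
  fix n and x y :: "real stream" assume h: "stake n x = stake n y"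
  have xy: "x !! j = y !! j" if "j < n" for j using arg_cong[OF h, of "\<lambda>l. l ! j"] that by simp
  have "Psi a c d x !! i = Psi a c d y !! i" if "i < n" for i
    unfolding Psi_snth using prefix_eq[of i x y] xy that by simp
  then show "stake n (Psi a c d x) = stake n (Psi a c d y)"
    by (intro nth_equalityI) auto
qed

lemma NPc_Psi: "NPc (Psi a c d)"
  unfolding NPc_def
proof (intro allI)
  fix l :: "real list" and xs :: "real stream"
  define C where "C = pcS (l @- 0 ## xs) (length l)"
  define p where "p = prevS (l @- 0 ## xs) (length l)"
  have e: "Psi a c d (l @- v ## xs) !! length l = hco a c d C p v" for v
  proof -
    have "(l @- v ## xs) !! j = (l @- 0 ## xs) !! j" if "j < length l" for j using that by simp
    then show ?thesis unfolding Psi_snth C_def p_def using prefix_eq[of "length l" "l @- v ## xs" "l @- 0 ## xs"]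
      by simp
  qed
  have C: "C \<in> nconf" unfolding C_def by (rule pcS_nconf)
  show "NP (\<lambda>v. Psi a c d (l @- v ## xs) !! length l)"
    unfolding e hco_def
  proof (cases "0 \<le> p")
    case True
    then show "NP (\<lambda>v. if 0 \<le> p then phi a (c C) (d C) (p + v) - phi a (c C) (d C) p else v)"
      using NP_phi_shift[OF True ok_N(7)[OF ok C] ok_N(3)[OF ok C]] by simp
  next
    case False
    then show "NP (\<lambda>v. if 0 \<le> p then phi a (c C) (d C) (p + v) - phi a (c C) (d C) p else v)"
      using NP_id by simp
  qed
qed

lemma ev_Psi:
  assumes g: "goodS x" shows "\<exists>m. \<forall>n\<ge>m. Psi a c d x !! n = x !! n"
proof -
  have pos: "\<forall>i. 0 < x !! i" using g unfolding goodS_def by simp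
  have sm: "strict_mono (S x)" by (rule S_strict_mono[OF pos])
  obtain M :: nat where M: "a + D \<le> real M" using real_arch_simple by blast
  obtain n0 where n0: "real M \<le> S x n0" using g unfolding goodS_def by blast
  have "Psi a c d x !! n = x !! n" if n: "Suc n0 \<le> n" for n
  proof -
    define C where "C = pcS x n"
    have C: "C \<in> nconf" unfolding C_def by (rule pcS_nconf)
    note h = ok_N[OF ok C]
    obtain k where k: "n = Suc k" "n0 \<le> k" using n by (cases n) auto
    have "S x n0 \<le> S x k" using strict_mono_less_eq[OF sm] k by simp
    then have p: "a + d C \<le> prevS x n" using M n0 h(4) k by (simp add: prevS_Suc)
    have p0: "0 \<le> prevS x n" using p ok_a[OF ok] h(3) by linarith
    have v: "0 < x !! n" using pos by simp
    show ?thesis unfolding Psi_snth hco_def C_def[symmetric]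
      using phi_big[OF h(3) p] phi_big[OF h(3), of a "prevS x n + x !! n"] p p0 v by simp
  qed
  then show ?thesis by blast
qed

lemma rel_Psi:
  assumes g: "goodS x" shows "Step a c d (cfg x) = cfg (Psi a c d x)"
proof -
  have pos: "\<forall>i. 0 < x !! i" using g unfolding goodS_def by simp
  have sm: "strict_mono (S x)" by (rule S_strict_mono[OF pos])
  define N where "N = cfg x"
  have Nr: "N = range (S x)" unfolding N_def by (simp add: cfg_eq g)
  have N: "N \<in> nconf" unfolding N_def by (rule cfg_nconf)
  note hN = ok_N[OF ok N]
  define f where "f s = phi a (c N) (d N) s" for s
  have prev0: "0 \<le> prevS x i" for i unfolding prevS_def using pos by (intro sum_nonneg) (simp add: less_imp_le)
  have loc: "phi a (c (pcS x i)) (d (pcS x i)) s = f s" if s: "s \<le> S x i" for i s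
  proof (cases "s \<le> a")
    case True then show ?thesis unfolding f_def by (simp add: phi_le)
  next
    case False
    have st: "stopped (pcS x i) a = stopped N a"
      unfolding stopped_def pcS_def Nr
    proof (rule set_eqI)
      fix y
      show "y \<in> (\<lambda>i. S x i) ` {..<i} \<inter> {0<..} \<inter> {0<..a} \<longleftrightarrow> y \<in> range (S x) \<inter> {0<..a}"
      proof
        assume "y \<in> range (S x) \<inter> {0<..a}"
        then obtain j where j: "y = S x j" "0 < y" "y \<le> a" by auto
        then have "S x j < S x i" using False s by simp
        then have "j < i" using strict_mono_less[OF sm] by simp
        then show "y \<in> (\<lambda>i. S x i) ` {..<i} \<inter> {0<..} \<inter> {0<..a}" using j by auto
      qed auto
    qed
    have P: "pcS x i \<in> nconf" by (rule pcS_nconf)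
    have "c (pcS x i) = c N" "d (pcS x i) = d N"
      using ok_N(5,6)[OF ok P] ok_N(5,6)[OF ok N] st by auto
    then show ?thesis unfolding f_def by simp
  qed
  have psi: "Psi a c d x !! i = f (S x i) - f (prevS x i)" for i
  proof -
    have "Psi a c d x !! i = phi a (c (pcS x i)) (d (pcS x i)) (S x i) - phi a (c (pcS x i)) (d (pcS x i)) (prevS x i)"
      unfolding Psi_snth hco_def using prev0[of i] by (simp add: S_prevS)
    also have "\<dots> = f (S x i) - f (prevS x i)"
      using loc[of "S x i" i] loc[of "prevS x i" i] pos by (simp add: S_prevS less_imp_le)
    finally show ?thesis .
  qed
  have sumP: "S (Psi a c d x) n = f (S x n)" for n
  proof -
    have "S (Psi a c d x) n = (\<Sum>i<Suc n. f (prevS x (Suc i)) - f (prevS x i))"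
      unfolding S_def lessThan_Suc_atMost[symmetric] by (simp add: psi prevS_Suc)
    also have "\<dots> = f (prevS x (Suc n)) - f (prevS x 0)" by (rule sum_lessThan_telescope)
    also have "\<dots> = f (S x n)" unfolding f_def using ok_a[OF ok] by (simp add: prevS_Suc prevS_0 phi_0)
    finally show ?thesis .
  qed
  have gP: "goodS (Psi a c d x)"
    unfolding goodS_def
  proof (intro conjI allI)
    fix i
    have "prevS x i < S x i" using pos by (simp add: S_prevS)
    then show "0 < Psi a c d x !! i" unfolding psi f_def using phi_strict_mono[OF hN(7) hN(3)] by simp
  next
    fix M :: nat
    obtain M' :: nat where M': "real M + a + 2 * D \<le> real M'" using real_arch_simple by blast
    obtain n where n: "real M' \<le> S x n" using g unfolding goodS_def by blast
    have D0: "0 \<le> D" using hN(3,4) by linarith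
    have big: "a + d N \<le> S x n" using M' n hN(4) D0 ok_a[OF ok] by linarith
    have "f (S x n) = S x n + (c N - 1) * d N" unfolding f_def by (rule phi_big[OF hN(3) big])
    moreover have "0 \<le> c N * d N" using hN(7,3) by simp
    ultimately have "S x n - d N \<le> f (S x n)" by (simp add: algebra_simps)
    then have "real M \<le> f (S x n)" using M' n hN(4) D0 ok_a[OF ok] by linarith
    then show "\<exists>n. real M \<le> S (Psi a c d x) n" using sumP by metis
  qed
  have "cfg (Psi a c d x) = range (S (Psi a c d x))" by (simp add: cfg_eq gP)
  also have "\<dots> = f ` range (S x)" unfolding sumP by auto
  also have "\<dots> = Step a c d (cfg x)" unfolding Step_def f_def N_def[symmetric] Nr ..
  finally show ?thesis by simp
qed

lemma Step_ac: "absolutely_continuous poisson (distr poisson Nspace (Step a c d))"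
proof (rule poisson_ac[OF measurable_Step[OF ok] measurable_Psi Tri_Psi NPc_Psi])
  show "AE X in SS. \<exists>m. \<forall>n\<ge>m. Psi a c d X !! n = X !! n"
    using AE_goodS by eventually_elim (rule ev_Psi)
  show "AE x in SS. Step a c d (cfg x) = cfg (Psi a c d x)"
    using AE_goodS by eventually_elim (rule rel_Psi)
qed

end


definition ovl :: "real \<Rightarrow> real \<Rightarrow> real \<Rightarrow> real" where "ovl a b s = max 0 (min b s - a)"

lemma int_ind_gen:
  assumes a: "0 \<le> a" and s: "0 \<le> s" and hi: "hi = min b s" and ab: "a \<le> b"
    and A: "A \<inter> {0..s} = {a<..hi} \<or> (s \<le> a \<and> A \<inter> {0..s} = {})"
  shows "(indicator A has_integral max 0 (hi - a)) {0..s::real}"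
proof -
  have e: "indicator A = (\<lambda>x. if x \<in> A then (1::real) else 0)" by (auto simp: indicator_def)
  have "((\<lambda>x. 1::real) has_integral max 0 (hi - a)) (A \<inter> {0..s})"
  proof (cases "s \<le> a")
    case True
    then have "A \<inter> {0..s} = {}" using A hi by auto
    moreover have "max 0 (hi - a) = 0" using True hi by simp
    ultimately show ?thesis by simp
  next
    case False
    then have Sx: "A \<inter> {0..s} = {a<..hi}" using A by auto
    have ahi: "a \<le> hi" using False hi ab by simp
    have "((\<lambda>x. 1::real) has_integral (hi - a)) {a..hi}" using has_integral_const_real[of "1::real" a hi] ahi by simp
    moreover have "((\<lambda>x. 1::real) has_integral (hi - a)) {a..hi} \<longleftrightarrow> ((\<lambda>x. 1::real) has_integral (hi - a)) {a<..hi}"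
      by (rule has_integral_spike_set_eq) (auto intro: negligible_subset[of "{a}"])
    ultimately show ?thesis unfolding Sx using ahi by simp
  qed
  then show ?thesis unfolding e by (subst has_integral_restrict_Int)
qed

lemma int_ind:
  assumes "0 \<le> a" "a \<le> b" "0 \<le> s"
  shows "(indicator {a<..b} has_integral ovl a b s) {0..s::real}"
  unfolding ovl_def
  by (rule int_ind_gen[OF assms(1,3) refl assms(2)]) (use assms in auto)

lemma int_ind_inf:
  assumes "0 \<le> a" "0 \<le> s"
  shows "(indicator {a<..} has_integral max 0 (s - a)) {0..s::real}"
proof -
  have "(indicator {a<..} has_integral max 0 (min (max a s) s - a)) {0..s::real}"
    by (rule int_ind_gen[OF assms(1,2) refl]) (use assms in auto)
  moreover have "max 0 (min (max a s) s - a) = max 0 (s - a)" by auto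
  ultimately show ?thesis by simp
qed

definition YT :: "(nat \<Rightarrow> real) \<Rightarrow> nat \<Rightarrow> real \<Rightarrow> (nat \<Rightarrow> real set \<Rightarrow> real) \<Rightarrow> real set \<Rightarrow> real \<Rightarrow> real" where
  "YT tt K a0 al N s = a0 * ovl 0 (tt 1) s
     + (\<Sum>j\<in>{1..<K}. al j (stopped N (tt j)) * ovl (tt j) (tt (Suc j)) s) + max 0 (s - tt K)"

definition ttok :: "(nat \<Rightarrow> real) \<Rightarrow> nat \<Rightarrow> bool" where
  "ttok tt K \<longleftrightarrow> tt 0 = 0 \<and> (\<forall>i<K. tt i < tt (Suc i))"

lemma ttok_mono: "ttok tt K \<Longrightarrow> i \<le> j \<Longrightarrow> j \<le> K \<Longrightarrow> tt i \<le> tt j"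
proof (induction j)
  case 0 then show ?case by simp
next
  case (Suc j)
  show ?case
  proof (cases "i = Suc j")
    case False
    then have "tt i \<le> tt j" using Suc by simp
    moreover have "tt j < tt (Suc j)" using Suc.prems unfolding ttok_def by simp
    ultimately show ?thesis by simp
  qed simp
qed

lemma ttok_nonneg: "ttok tt K \<Longrightarrow> j \<le> K \<Longrightarrow> 0 \<le> tt j"
  using ttok_mono[of tt K 0 j] by (simp add: ttok_def)

lemma ttok_mono_le: "ttok tt K \<Longrightarrow> K' \<le> K \<Longrightarrow> ttok tt K'"
  by (auto simp: ttok_def)

lemma ytime_YT:
  assumes tt: "ttok tt K" and K: "1 \<le> K" and s: "0 \<le> s"
  shows "ytime tt K a0 al N s = YT tt K a0 al N s"
proof -
  have le: "i \<le> j \<Longrightarrow> j \<le> K \<Longrightarrow> tt i \<le> tt j" for i j by (rule ttok_mono[OF tt])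
  have nn: "j \<le> K \<Longrightarrow> 0 \<le> tt j" for j by (rule ttok_nonneg[OF tt])
  have t0: "tt 0 = 0" using tt by (simp add: ttok_def)
  have i1: "(indicator {0<..tt 1} has_integral ovl 0 (tt 1) s) {0..s}"
    by (rule int_ind) (use le[of 0 1] K s t0 in auto)
  have i2: "((\<lambda>x. \<Sum>j\<in>{1..<K}. al j (stopped N (tt j)) * indicator {tt j<..tt (Suc j)} x) has_integral
      (\<Sum>j\<in>{1..<K}. al j (stopped N (tt j)) * ovl (tt j) (tt (Suc j)) s)) {0..s}"
  proof (rule has_integral_sum)
    fix j assume j: "j \<in> {1..<K}"
    show "((\<lambda>x. al j (stopped N (tt j)) * indicator {tt j<..tt (Suc j)} x) has_integral
        al j (stopped N (tt j)) * ovl (tt j) (tt (Suc j)) s) {0..s}"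
      by (rule has_integral_mult_right, rule int_ind) (use j nn le[of j "Suc j"] s in auto)
  qed simp
  have i3: "(indicator {tt K<..} has_integral max 0 (s - tt K)) {0..s}"
    by (rule int_ind_inf) (use nn s in auto)
  have "(ydot tt K a0 al N has_integral YT tt K a0 al N s) {0..s}"
    unfolding ydot_def[abs_def] YT_def
    by (intro has_integral_add has_integral_mult_right i1 i2 i3)
  then show ?thesis unfolding ytime_def by (rule integral_unique)
qed

definition NiceH :: "(real \<Rightarrow> real) \<Rightarrow> bool" where
  "NiceH h \<longleftrightarrow> h 0 = 0 \<and> (\<forall>s t. 0 \<le> s \<longrightarrow> s < t \<longrightarrow> h s < h t) \<and> (\<forall>y\<ge>0. \<exists>s\<ge>0. h s = y)"

lemma NiceH_inv:
  assumes h: "NiceH h" and s0: "0 \<le> s0"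
  shows "Inf {s. 0 \<le> s \<and> h s > h s0} = s0"
proof -
  have m: "\<And>s t. 0 \<le> s \<Longrightarrow> s < t \<Longrightarrow> h s < h t" using h by (auto simp: NiceH_def)
  have "{s. 0 \<le> s \<and> h s > h s0} = {s0<..}"
  proof (rule set_eqI)
    fix s
    show "s \<in> {s. 0 \<le> s \<and> h s > h s0} \<longleftrightarrow> s \<in> {s0<..}"
    proof
      assume "s \<in> {s. 0 \<le> s \<and> h s > h s0}"
      then have "0 \<le> s" "h s > h s0" by auto
      then show "s \<in> {s0<..}" using m[of s s0] by (cases "s0 < s"; cases "s = s0") auto
    next
      assume "s \<in> {s0<..}"
      then show "s \<in> {s. 0 \<le> s \<and> h s > h s0}" using m[OF s0] s0 by auto
    qed
  qed
  then show ?thesis by simp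
qed

lemma NiceH_neg:
  assumes h: "NiceH h" and t: "t < 0"
  shows "Inf {s. 0 \<le> s \<and> h s > t} = 0"
proof -
  have m: "\<And>s. 0 \<le> s \<Longrightarrow> 0 \<le> h s" using h unfolding NiceH_def
    by (metis order_le_less order_less_imp_le)
  have "{s. 0 \<le> s \<and> h s > t} = {0..}" using m t by (force)
  then show ?thesis by simp
qed

lemma cnt_strict:
  assumes N: "N \<in> nconf" and p: "p \<in> N" and q: "q < p"
  shows "cnt N q < cnt N p"
proof -
  have p0: "0 < p" using nconfD(1)[OF N] p by auto
  have sub1: "N \<inter> {0<..q} \<subseteq> N \<inter> {0<..p}" using q by auto
  have ne: "N \<inter> {0<..q} \<noteq> N \<inter> {0<..p}"
  proof
    assume eq: "N \<inter> {0<..q} = N \<inter> {0<..p}"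
    have "p \<in> N \<inter> {0<..p}" using p p0 by simp
    then have "p \<in> N \<inter> {0<..q}" using eq by simp
    then show False using q by simp
  qed
  have sub: "N \<inter> {0<..q} \<subset> N \<inter> {0<..p}" using sub1 ne by blast
  show ?thesis unfolding cnt_def by (rule psubset_card_mono[OF nconfD(2)[OF N] sub])
qed

lemma conf_of_image:
  assumes N: "N \<in> nconf" and h: "NiceH h"
  shows "conf_of (\<lambda>t. cnt N (Inf {s. 0 \<le> s \<and> h s > t})) = h ` N"
proof -
  have m: "\<And>s t. 0 \<le> s \<Longrightarrow> s < t \<Longrightarrow> h s < h t" and h0: "h 0 = 0"
    and sur: "\<And>y. 0 \<le> y \<Longrightarrow> \<exists>s\<ge>0. h s = y" using h by (auto simp: NiceH_def)
  have m_iff: "h s < h t \<longleftrightarrow> s < t" if "0 \<le> s" "0 \<le> t" for s t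
    using m[of s t] m[of t s] that by (cases "s < t"; cases "s = t") auto
  define g where "g t = Inf {s. 0 \<le> s \<and> h s > t}" for t
  have g_h: "0 \<le> s \<Longrightarrow> g (h s) = s" for s unfolding g_def by (rule NiceH_inv[OF h])
  have g_neg: "t < 0 \<Longrightarrow> g t = 0" for t unfolding g_def by (rule NiceH_neg[OF h])
  have Npos: "p \<in> N \<Longrightarrow> 0 < p" for p using nconfD(1)[OF N] by auto
  show ?thesis unfolding g_def[symmetric]
  proof (rule set_eqI)
    fix t
    show "t \<in> conf_of (\<lambda>t. cnt N (g t)) \<longleftrightarrow> t \<in> h ` N"
    proof
      assume "t \<in> h ` N"
      then obtain p where p: "p \<in> N" "t = h p" by auto
      have p0: "0 < p" by (rule Npos[OF p(1)])
      have t0: "0 < t" using m[of 0 p] p0 h0 p by simp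
      have "cnt N (g s) < cnt N (g t)" if s: "s < t" for s
      proof -
        have gt: "g t = p" using p g_h p0 by simp
        have "g s < p"
        proof (cases "s < 0")
          case True then show ?thesis using g_neg p0 by simp
        next
          case False
          then obtain u where u: "0 \<le> u" "h u = s" using sur[of s] by auto
          have "u < p" using m_iff[OF u(1), of p] p0 s p u by simp
          moreover have "g s = u" using g_h[OF u(1)] u(2) by simp
          ultimately show ?thesis by simp
        qed
        then show ?thesis unfolding gt by (rule cnt_strict[OF N p(1)])
      qed
      then have "eventually (\<lambda>s. cnt N (g s) < cnt N (g t)) (at_left t)"
        unfolding eventually_at_left_field using t0 by (intro exI[of _ 0]) auto
      then show "t \<in> conf_of (\<lambda>t. cnt N (g t))" unfolding conf_of_def using t0 by simp
    next
      assume "t \<in> conf_of (\<lambda>t. cnt N (g t))"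
      then have t0: "0 < t" and ev: "eventually (\<lambda>s. cnt N (g s) < cnt N (g t)) (at_left t)"
        unfolding conf_of_def by auto
      obtain p where p: "0 \<le> p" "h p = t" using sur[of t] t0 by auto
      have p0: "0 < p" using p t0 h0 by (cases "p = 0") auto
      have gt: "g t = p" using g_h p by auto
      show "t \<in> h ` N"
      proof (rule ccontr)
        assume "t \<notin> h ` N"
        then have pN: "p \<notin> N" using p by auto
        define F where "F = N \<inter> {0<..p}"
        have finF: "finite F" unfolding F_def by (rule nconfD(2)[OF N])
        define q where "q = Max (insert 0 F)"
        have qF: "q \<in> insert 0 F" unfolding q_def using finF by (intro Max_in) auto
        have q_lt: "q < p" using qF pN p0 by (auto simp: F_def order_le_less)
        have q0: "0 \<le> q" unfolding q_def using finF by (intro Max_ge) auto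
        have Fq: "x \<in> F \<Longrightarrow> x \<le> q" for x unfolding q_def using finF by (intro Max_ge) auto
        obtain b where b: "b < t" "\<forall>y>b. y < t \<longrightarrow> cnt N (g y) < cnt N (g t)"
          using ev unfolding eventually_at_left_field by blast
        define y where "y = (max b (h q) + t) / 2"
        have hq: "h q < t" using m[OF q0 q_lt] p by simp
        have y1: "b < y" "h q < y" "y < t" using b(1) hq unfolding y_def by auto
        have "0 \<le> h q" using m[of 0 q] q0 h0 by (cases "q = 0") auto
        then obtain u where u: "0 \<le> u" "h u = y" using sur[of y] y1 by auto
        have gy: "g y = u" using g_h u by auto
        have "q < u" using m_iff[OF q0 u(1)] y1 u by simp
        moreover have "u < p" using m_iff[OF u(1) p(1)] y1 u p by simp
        ultimately have "N \<inter> {0<..u} = N \<inter> {0<..p}" using Fq unfolding F_def by force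
        then have "cnt N (g y) = cnt N (g t)" unfolding gy gt cnt_def by simp
        then show False using b(2) y1 by auto
      qed
    qed
  qed
qed

lemma Ymap_image:
  assumes tt: "ttok tt K" and K: "1 \<le> K" and N: "N \<in> nconf" and h: "NiceH (YT tt K a0 al N)"
  shows "Ymap tt K a0 al N = YT tt K a0 al N ` N"
proof -
  have "ystar tt K a0 al N t = Inf {s. 0 \<le> s \<and> YT tt K a0 al N s > t}" for t
    unfolding ystar_def using ytime_YT[OF tt K] by (intro arg_cong[where f=Inf]) auto
  then show ?thesis unfolding Ymap_def using conf_of_image[OF N h] by simp
qed


definition InvP :: "(real set \<Rightarrow> real set) \<Rightarrow> (real set \<Rightarrow> real set) \<Rightarrow> bool" where
  "InvP F G \<longleftrightarrow> F \<in> Nspace \<rightarrow>\<^sub>M Nspace \<and> G \<in> Nspace \<rightarrow>\<^sub>M Nspace \<and>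
     (\<forall>N\<in>nconf. G (F N) = N \<and> F (G N) = N) \<and>
     absolutely_continuous poisson (distr poisson Nspace F) \<and>
     absolutely_continuous poisson (distr poisson Nspace G)"

lemma space_poisson[simp]: "space poisson = nconf"
  by (simp add: poisson_eq)

lemma sets_poisson[simp, measurable_cong]: "sets poisson = sets Nspace"
  by (simp add: poisson_eq)

lemma ac_null:
  assumes F: "F \<in> Nspace \<rightarrow>\<^sub>M Nspace" and ac: "absolutely_continuous poisson (distr poisson Nspace F)"
    and A: "A \<in> null_sets poisson"
  shows "F -` A \<inter> nconf \<in> null_sets poisson"
proof -
  have Fp: "F \<in> poisson \<rightarrow>\<^sub>M Nspace" using F measurable_cong_sets[OF sets_poisson refl, of Nspace] by simp
  have As: "A \<in> sets Nspace" using A by (simp add: null_sets_def)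
  have "A \<in> null_sets (distr poisson Nspace F)" using ac A unfolding absolutely_continuous_def by auto
  then have "emeasure (distr poisson Nspace F) A = 0" by (simp add: null_sets_def)
  then have "emeasure poisson (F -` A \<inter> nconf) = 0" by (simp add: emeasure_distr[OF Fp As])
  moreover have "F -` A \<inter> nconf \<in> sets poisson" using measurable_sets[OF Fp As] by simp
  ultimately show ?thesis by (simp add: null_sets_def)
qed

lemma ac_comp:
  assumes F: "F \<in> Nspace \<rightarrow>\<^sub>M Nspace" and G: "G \<in> Nspace \<rightarrow>\<^sub>M Nspace"
    and acF: "absolutely_continuous poisson (distr poisson Nspace F)"
    and acG: "absolutely_continuous poisson (distr poisson Nspace G)"
  shows "absolutely_continuous poisson (distr poisson Nspace (\<lambda>N. G (F N)))"
  unfolding absolutely_continuous_def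
proof
  fix A assume A: "A \<in> null_sets poisson"
  have As: "A \<in> sets Nspace" using A by (simp add: null_sets_def)
  have B: "G -` A \<inter> nconf \<in> null_sets poisson" by (rule ac_null[OF G acG A])
  have C: "F -` (G -` A \<inter> nconf) \<inter> nconf \<in> null_sets poisson" by (rule ac_null[OF F acF B])
  have FN: "N \<in> nconf \<Longrightarrow> F N \<in> nconf" for N using measurable_space[OF F] by simp
  have eq: "F -` (G -` A \<inter> nconf) \<inter> nconf = (\<lambda>N. G (F N)) -` A \<inter> nconf" using FN by auto
  have GF0: "(\<lambda>N. G (F N)) \<in> Nspace \<rightarrow>\<^sub>M Nspace" using measurable_comp[OF F G] unfolding comp_def .
  have GF: "(\<lambda>N. G (F N)) \<in> poisson \<rightarrow>\<^sub>M Nspace"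
    using GF0 measurable_cong_sets[OF sets_poisson refl, of Nspace] by simp
  have "emeasure (distr poisson Nspace (\<lambda>N. G (F N))) A = emeasure poisson ((\<lambda>N. G (F N)) -` A \<inter> nconf)"
    by (simp add: emeasure_distr[OF GF As])
  also have "\<dots> = 0" using C unfolding eq by (simp add: null_sets_def)
  finally show "A \<in> null_sets (distr poisson Nspace (\<lambda>N. G (F N)))" using As by (simp add: null_sets_def)
qed

lemma InvP_comp:
  assumes "InvP F G" "InvP F' G'"
  shows "InvP (\<lambda>N. F' (F N)) (\<lambda>N. G (G' N))"
proof -
  have F: "F \<in> Nspace \<rightarrow>\<^sub>M Nspace" and G: "G \<in> Nspace \<rightarrow>\<^sub>M Nspace"
    and F': "F' \<in> Nspace \<rightarrow>\<^sub>M Nspace" and G': "G' \<in> Nspace \<rightarrow>\<^sub>M Nspace"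
    and inv: "\<And>N. N \<in> nconf \<Longrightarrow> G (F N) = N \<and> F (G N) = N"
    and inv': "\<And>N. N \<in> nconf \<Longrightarrow> G' (F' N) = N \<and> F' (G' N) = N"
    and ac: "absolutely_continuous poisson (distr poisson Nspace F)"
      "absolutely_continuous poisson (distr poisson Nspace G)"
      "absolutely_continuous poisson (distr poisson Nspace F')"
      "absolutely_continuous poisson (distr poisson Nspace G')"
    using assms unfolding InvP_def by auto
  have FN: "N \<in> nconf \<Longrightarrow> F N \<in> nconf" for N using measurable_space[OF F] by simp
  have GN: "N \<in> nconf \<Longrightarrow> G' N \<in> nconf" for N using measurable_space[OF G'] by simp
  show ?thesis unfolding InvP_def
  proof (intro conjI ballI)
    show "(\<lambda>N. F' (F N)) \<in> Nspace \<rightarrow>\<^sub>M Nspace" using measurable_comp[OF F F'] by (simp add: comp_def)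
    show "(\<lambda>N. G (G' N)) \<in> Nspace \<rightarrow>\<^sub>M Nspace" using measurable_comp[OF G' G] by (simp add: comp_def)
    fix N assume N: "N \<in> nconf"
    show "G (G' (F' (F N))) = N" using inv' [OF FN[OF N]] inv[OF N] by simp
    show "F' (F (G (G' N))) = N" using inv[OF GN[OF N]] inv'[OF N] by simp
  next
    show "absolutely_continuous poisson (distr poisson Nspace (\<lambda>N. F' (F N)))"
      by (rule ac_comp[OF F F' ac(1) ac(3)])
    show "absolutely_continuous poisson (distr poisson Nspace (\<lambda>N. G (G' N)))"
      by (rule ac_comp[OF G' G ac(4) ac(2)])
  qed
qed

lemma InvP_cong:
  assumes "InvP F G" and eq: "\<And>N. N \<in> nconf \<Longrightarrow> F' N = F N"
  shows "InvP F' G"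
proof -
  have F: "F \<in> Nspace \<rightarrow>\<^sub>M Nspace" and G: "G \<in> Nspace \<rightarrow>\<^sub>M Nspace"
    and inv: "\<And>N. N \<in> nconf \<Longrightarrow> G (F N) = N \<and> F (G N) = N"
    and ac: "absolutely_continuous poisson (distr poisson Nspace F)"
      "absolutely_continuous poisson (distr poisson Nspace G)"
    using assms unfolding InvP_def by auto
  have GN: "N \<in> nconf \<Longrightarrow> G N \<in> nconf" for N using measurable_space[OF G] by simp
  have F': "F' \<in> Nspace \<rightarrow>\<^sub>M Nspace" using F by (rule measurable_cong[THEN iffD1, rotated]) (simp add: eq)
  have "distr poisson Nspace F' = distr poisson Nspace F" by (rule distr_cong) (auto simp: eq)
  then show ?thesis unfolding InvP_def using F' G inv ac eq GN by auto
qed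

lemma invertible_InvP:
  assumes "InvP F G" shows "invertible F"
proof -
  have F: "F \<in> Nspace \<rightarrow>\<^sub>M Nspace" and G: "G \<in> Nspace \<rightarrow>\<^sub>M Nspace"
    and inv: "\<And>N. N \<in> nconf \<Longrightarrow> G (F N) = N \<and> F (G N) = N"
    and ac: "absolutely_continuous poisson (distr poisson Nspace F)"
      "absolutely_continuous poisson (distr poisson Nspace G)"
    using assms unfolding InvP_def by auto
  have "AE N in poisson. G (F N) = N" by (rule AE_I2) (simp add: inv)
  moreover have "AE N in poisson. F (G N) = N" by (rule AE_I2) (simp add: inv)
  ultimately show ?thesis
    unfolding invertible_def left_invertible_def right_invertible_def using F G ac by blast
qed

lemma InvP_Step:
  assumes ok: "stepok a e D c d"
  shows "InvP (Step a c d) (Step a (\<lambda>N. 1 / c N) (\<lambda>N. c N * d N))"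
  unfolding InvP_def
  using measurable_Step[OF ok] measurable_Step[OF stepok_inv[OF ok]] Step_inv[OF ok] Step_inv2[OF ok]
    Step_ac[OF ok] Step_ac[OF stepok_inv[OF ok]] by auto

lemma stopped_stopped: "b \<le> a \<Longrightarrow> stopped (stopped N a) b = stopped N b"
  unfolding stopped_def by auto

lemma ovl_phi_low:
  assumes "0 \<le> lo" "lo \<le> hi" "hi \<le> a" "0 < c" "0 \<le> d"
  shows "ovl lo hi (phi a c d s) = ovl lo hi s"
proof (cases "s \<le> a")
  case True then show ?thesis by (simp add: phi_le)
next
  case False
  then have "a < phi a c d s" using phi_gt[of c d a s] assms by simp
  then have "min hi (phi a c d s) = hi" "min hi s = hi" using False assms by auto
  then show ?thesis unfolding ovl_def by simp
qed

lemma ovl_phi_top: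
  assumes c: "0 < c" and d: "0 \<le> d"
  shows "max 0 (phi a c d s - a) = c * ovl a (a + d) s + max 0 (s - (a + d))"
proof -
  consider "s \<le> a" | "a < s" "s \<le> a + d" | "a + d < s" by linarith
  then show ?thesis
  proof cases
    case 1
    have p: "phi a c d s = s" using 1 by (rule phi_le)
    have "min (a + d) s \<le> a" using 1 by simp
    then have o: "ovl a (a + d) s = 0" unfolding ovl_def by simp
    have m1: "max 0 (s - a) = 0" using 1 by simp
    have m2: "max 0 (s - (a + d)) = 0" using 1 d by simp
    show ?thesis unfolding p o m1 m2 by simp
  next
    case 2
    have p: "phi a c d s = a + c * (s - a)" using 2 by (simp add: phi_def)
    have o: "ovl a (a + d) s = s - a" unfolding ovl_def using 2 by simp
    have "0 \<le> c * (s - a)" using 2 c by simp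
    then have m1: "max 0 (a + c * (s - a) - a) = c * (s - a)" by simp
    have m2: "max 0 (s - (a + d)) = 0" using 2 by simp
    show ?thesis unfolding p o m1 m2 by simp
  next
    case 3
    have p: "phi a c d s = s + (c - 1) * d" using 3 d by (simp add: phi_def)
    have o: "ovl a (a + d) s = d" unfolding ovl_def using 3 d by simp
    have cd: "0 \<le> c * d" using c d by simp
    have m2: "max 0 (s - (a + d)) = s - (a + d)" using 3 by simp
    have e: "s + (c - 1) * d - a = c * d + (s - (a + d))" by (simp add: algebra_simps)
    have m1: "max 0 (s + (c - 1) * d - a) = c * d + (s - (a + d))" unfolding e using cd 3 by simp
    show ?thesis unfolding p o m1 m2 by simp
  qed
qed

lemma NiceH_phi: "0 \<le> a \<Longrightarrow> 0 < c \<Longrightarrow> 0 \<le> d \<Longrightarrow> NiceH (phi a c d)"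
  unfolding NiceH_def
proof (intro conjI allI impI)
  assume a: "0 \<le> a" and c: "0 < c" and d: "0 \<le> d"
  show "phi a c d 0 = 0" by (rule phi_0[OF a])
  show "phi a c d s < phi a c d t" if "0 \<le> s" "s < t" for s t using phi_strict_mono[OF c d that(2)] .
  fix y :: real assume y: "0 \<le> y"
  have c': "0 < 1 / c" "0 \<le> c * d" using c d by auto
  have "phi a (1 / c) (c * d) 0 \<le> phi a (1 / c) (c * d) y" by (rule phi_mono[OF c' y])
  then have "0 \<le> phi a (1 / c) (c * d) y" using phi_0[OF a] by simp
  then show "\<exists>s\<ge>0. phi a c d s = y" using phi_inv2[OF c d] by blast
qed

lemma NiceH_comp:
  assumes g: "NiceH g" and a: "0 \<le> a" and c: "0 < c" and d: "0 \<le> d"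
    and h: "\<And>s. 0 \<le> s \<Longrightarrow> h s = g (phi a c d s)"
  shows "NiceH h"
proof -
  have p: "NiceH (phi a c d)" by (rule NiceH_phi[OF a c d])
  have pnn: "0 \<le> s \<Longrightarrow> 0 \<le> phi a c d s" for s using phi_mono[OF c d, of 0 s a] phi_0[OF a] by simp
  show ?thesis unfolding NiceH_def
  proof (intro conjI allI impI)
    show "h 0 = 0" using h[of 0] g p by (simp add: NiceH_def)
    fix s t :: real assume st: "0 \<le> s" "s < t"
    have "phi a c d s < phi a c d t" using phi_strict_mono[OF c d st(2)] .
    then show "h s < h t" using g h[OF st(1)] h[of t] st pnn[OF st(1)] unfolding NiceH_def by auto
  next
    fix y :: real assume y: "0 \<le> y"
    obtain u where u: "0 \<le> u" "g u = y" using g y unfolding NiceH_def by blast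
    obtain s where s: "0 \<le> s" "phi a c d s = u" using p u unfolding NiceH_def by blast
    show "\<exists>s\<ge>0. h s = y" using h[OF s(1)] s u by auto
  qed
qed

lemma NiceH_cong:
  assumes g: "NiceH g" and h: "\<And>s. 0 \<le> s \<Longrightarrow> h s = g s"
  shows "NiceH h"
  unfolding NiceH_def
proof (intro conjI allI impI)
  show "h 0 = 0" using g h[of 0] by (simp add: NiceH_def)
  fix s t :: real assume "0 \<le> s" "s < t"
  then show "h s < h t" using g h[of s] h[of t] by (simp add: NiceH_def)
next
  fix y :: real assume "0 \<le> y"
  then obtain s where "0 \<le> s" "g s = y" using g by (auto simp: NiceH_def)
  then show "\<exists>s\<ge>0. h s = y" using h by auto
qed

lemma YT_base:
  assumes tt: "ttok tt 1" and a0: "0 < a0" and s: "0 \<le> s"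
  shows "YT tt 1 a0 al N s = phi 0 a0 (tt 1) s"
proof -
  have t1: "0 \<le> tt 1" using ttok_nonneg[OF tt, of 1] by simp
  have "max 0 (phi 0 a0 (tt 1) s - 0) = a0 * ovl 0 (0 + tt 1) s + max 0 (s - (0 + tt 1))"
    by (rule ovl_phi_top[OF a0 t1])
  moreover have "0 \<le> phi 0 a0 (tt 1) s" using phi_mono[OF a0 t1 s, of 0] phi_0[of 0] by simp
  ultimately show ?thesis unfolding YT_def by simp
qed

lemma YT_step:
  assumes tt: "ttok tt (Suc K)" and K: "1 \<le> K" and s: "0 \<le> s" and c: "0 < al K (stopped N (tt K))"
    and stM: "\<And>j. j \<le> K \<Longrightarrow> stopped M (tt j) = stopped N (tt j)"
  shows "YT tt (Suc K) a0 al N s =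
    YT tt K a0 al M (phi (tt K) (al K (stopped N (tt K))) (tt (Suc K) - tt K) s)"
proof -
  define a where "a = tt K"
  define c where "c = al K (stopped N (tt K))"
  define d where "d = tt (Suc K) - tt K"
  have c0: "0 < c" using c unfolding c_def .
  have d0: "0 \<le> d" using tt unfolding d_def ttok_def by (auto intro: less_imp_le)
  have le: "i \<le> j \<Longrightarrow> j \<le> Suc K \<Longrightarrow> tt i \<le> tt j" for i j by (rule ttok_mono[OF tt])
  have nn: "j \<le> Suc K \<Longrightarrow> 0 \<le> tt j" for j by (rule ttok_nonneg[OF tt])
  let ?p = "phi a c d s"
  have first: "ovl 0 (tt 1) ?p = ovl 0 (tt 1) s"
    by (rule ovl_phi_low) (use nn[of 1] le[of 1 K] K c0 d0 in \<open>auto simp: a_def\<close>)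
  have mid: "(\<Sum>j\<in>{1..<K}. al j (stopped M (tt j)) * ovl (tt j) (tt (Suc j)) ?p) =
             (\<Sum>j\<in>{1..<K}. al j (stopped N (tt j)) * ovl (tt j) (tt (Suc j)) s)"
  proof (rule sum.cong[OF refl])
    fix j assume j: "j \<in> {1..<K}"
    have "ovl (tt j) (tt (Suc j)) ?p = ovl (tt j) (tt (Suc j)) s"
      by (rule ovl_phi_low) (use j nn[of j] le[of j "Suc j"] le[of "Suc j" K] c0 d0 in \<open>auto simp: a_def\<close>)
    then show "al j (stopped M (tt j)) * ovl (tt j) (tt (Suc j)) ?p = al j (stopped N (tt j)) * ovl (tt j) (tt (Suc j)) s"
      using stM[of j] j by simp
  qed
  have top: "max 0 (?p - a) = c * ovl a (a + d) s + max 0 (s - (a + d))"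
    by (rule ovl_phi_top[OF c0 d0])
  have ad: "a + d = tt (Suc K)" unfolding a_def d_def by simp
  have split: "{1..<Suc K} = insert K {1..<K}" using K by auto
  have L: "YT tt (Suc K) a0 al N s = a0 * ovl 0 (tt 1) s
      + (\<Sum>j\<in>{1..<K}. al j (stopped N (tt j)) * ovl (tt j) (tt (Suc j)) s)
      + c * ovl a (tt (Suc K)) s + max 0 (s - tt (Suc K))"
  proof -
    have "(\<Sum>j\<in>{1..<Suc K}. al j (stopped N (tt j)) * ovl (tt j) (tt (Suc j)) s) =
        al K (stopped N (tt K)) * ovl (tt K) (tt (Suc K)) s +
        (\<Sum>j\<in>{1..<K}. al j (stopped N (tt j)) * ovl (tt j) (tt (Suc j)) s)"
      unfolding split by (rule sum.insert) auto
    then show ?thesis unfolding YT_def c_def a_def using K by simp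
  qed
  have R: "YT tt K a0 al M ?p = a0 * ovl 0 (tt 1) s
      + (\<Sum>j\<in>{1..<K}. al j (stopped N (tt j)) * ovl (tt j) (tt (Suc j)) s) + max 0 (?p - a)"
    unfolding YT_def a_def using first mid by (simp add: a_def)
  have "YT tt (Suc K) a0 al N s = YT tt K a0 al M ?p" using L R top[unfolded ad] by linarith
  then show ?thesis unfolding a_def c_def d_def .
qed


lemma main_ind:
  fixes tt :: "nat \<Rightarrow> real" and k :: nat and \<epsilon> a0 :: real and al :: "nat \<Rightarrow> real set \<Rightarrow> real"
  assumes tt: "ttok tt k" and e: "0 < \<epsilon>" and a0: "\<epsilon> \<le> a0" "a0 \<le> 1 / \<epsilon>"
    and alm: "\<And>j. 1 \<le> j \<Longrightarrow> j < k \<Longrightarrow> al j \<in> borel_measurable Nspace"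
    and alb: "\<And>j N. 1 \<le> j \<Longrightarrow> j < k \<Longrightarrow> N \<in> nconf \<Longrightarrow> \<epsilon> \<le> al j N \<and> al j N \<le> 1 / \<epsilon>"
  shows "1 \<le> K \<Longrightarrow> K \<le> k \<Longrightarrow> (\<forall>N\<in>nconf. NiceH (YT tt K a0 al N)) \<and> (\<exists>G. InvP (Ymap tt K a0 al) G)"
proof (induction K)
  case 0 then show ?case by simp
next
  case (Suc K)
  have ttK: "ttok tt (Suc K)" by (rule ttok_mono_le[OF tt Suc.prems(2)])
  have a0pos: "0 < a0" using e a0 by linarith
  have Npos: "N \<in> nconf \<Longrightarrow> p \<in> N \<Longrightarrow> 0 \<le> p" for N p using nconfD(1) by fastforce
  show ?case
  proof (cases "K = 0")
    case True
    have tt1: "ttok tt 1" using ttK True by simp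
    have t1: "0 < tt 1" using tt1 by (simp add: ttok_def)
    have ok0: "stepok 0 \<epsilon> (tt 1) (\<lambda>_. a0) (\<lambda>_. tt 1)"
      unfolding stepok_def using e a0 t1 by auto
    have YT1: "0 \<le> s \<Longrightarrow> YT tt 1 a0 al N s = phi 0 a0 (tt 1) s" for N s
      by (rule YT_base[OF tt1 a0pos])
    have nice: "NiceH (YT tt 1 a0 al N)" for N
      by (rule NiceH_cong[OF NiceH_phi]) (use a0pos t1 YT1 in auto)
    have eq: "Ymap tt 1 a0 al N = Step 0 (\<lambda>_. a0) (\<lambda>_. tt 1) N" if N: "N \<in> nconf" for N
    proof -
      have "Ymap tt 1 a0 al N = YT tt 1 a0 al N ` N" by (rule Ymap_image[OF tt1 _ N nice]) simp
      also have "\<dots> = phi 0 a0 (tt 1) ` N" using YT1 Npos[OF N] by (intro image_cong) auto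
      finally show ?thesis by (simp add: Step_def)
    qed
    have "InvP (Ymap tt 1 a0 al) (Step 0 (\<lambda>N. 1 / a0) (\<lambda>N. a0 * tt 1))"
      by (rule InvP_cong[OF InvP_Step[OF ok0]]) (rule eq)
    then show ?thesis using nice True by auto
  next
    case False
    then have K1: "1 \<le> K" by simp
    have Kk: "K < k" using Suc.prems by simp
    have IH: "(\<forall>N\<in>nconf. NiceH (YT tt K a0 al N)) \<and> (\<exists>G. InvP (Ymap tt K a0 al) G)"
      by (rule Suc.IH) (use K1 Kk in auto)
    have ttKk: "ttok tt K" by (rule ttok_mono_le[OF tt]) (use Kk in simp)
    define a where "a = tt K"
    define c where "c N = al K (stopped N a)" for N
    define d where "d = (\<lambda>_::real set. tt (Suc K) - tt K)"
    have a_nn: "0 \<le> a" unfolding a_def by (rule ttok_nonneg[OF ttK]) simp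
    have dpos: "0 < tt (Suc K) - tt K" using ttK by (simp add: ttok_def)
    have ok: "stepok a \<epsilon> (tt (Suc K) - tt K) c d"
      unfolding stepok_def
    proof (intro conjI ballI)
      show "0 \<le> a" by (rule a_nn)
      show "0 < \<epsilon>" by (rule e)
      have [measurable]: "al K \<in> borel_measurable Nspace" by (rule alm[OF K1 Kk])
      show "c \<in> borel_measurable Nspace" unfolding c_def by measurable
      show "d \<in> borel_measurable Nspace" unfolding d_def by simp
      fix N assume N: "N \<in> nconf"
      have b: "\<epsilon> \<le> c N \<and> c N \<le> 1 / \<epsilon>" unfolding c_def by (rule alb[OF K1 Kk stopped_nconf[OF N]])
      then show "\<epsilon> \<le> c N" "c N \<le> 1 / \<epsilon>" by auto
      show "0 \<le> d N" "d N \<le> tt (Suc K) - tt K" using dpos unfolding d_def by auto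
      show "c N = c (stopped N a)" unfolding c_def by (simp add: stopped_stopped)
      show "d N = d (stopped N a)" unfolding d_def by simp
    qed
    have key: "(\<forall>s\<ge>0. YT tt (Suc K) a0 al N s = YT tt K a0 al (Step a c d N) (phi a (c N) (d N) s))
        \<and> Step a c d N \<in> nconf" if N: "N \<in> nconf" for N
    proof -
      define M where "M = Step a c d N"
      have M: "M \<in> nconf" unfolding M_def by (rule Step_nconf[OF ok N])
      have stM: "stopped M (tt j) = stopped N (tt j)" if j: "j \<le> K" for j
      proof -
        have le: "tt j \<le> a" unfolding a_def by (rule ttok_mono[OF ttK j]) simp
        have "stopped M (tt j) = stopped (stopped M a) (tt j)" by (simp add: stopped_stopped[OF le])
        also have "\<dots> = stopped (stopped N a) (tt j)" unfolding M_def by (simp add: stopped_Step[OF ok N])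
        also have "\<dots> = stopped N (tt j)" by (simp add: stopped_stopped[OF le])
        finally show ?thesis .
      qed
      have cpos: "0 < al K (stopped N (tt K))" using ok_N(7)[OF ok N] unfolding c_def a_def .
      have "YT tt (Suc K) a0 al N s = YT tt K a0 al M (phi a (c N) (d N) s)" if s: "0 \<le> s" for s
        using YT_step[where tt=tt and K=K and s=s and al=al and N=N and M=M, OF ttK K1 s cpos stM] unfolding a_def c_def d_def by simp
      then show ?thesis using M unfolding M_def by auto
    qed
    have nice: "NiceH (YT tt (Suc K) a0 al N)" if N: "N \<in> nconf" for N
    proof (rule NiceH_comp)
      show "NiceH (YT tt K a0 al (Step a c d N))" using IH key[OF N] by auto
      show "0 \<le> a" by (rule a_nn)
      show "0 < c N" by (rule ok_N(7)[OF ok N])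
      show "0 \<le> d N" by (rule ok_N(3)[OF ok N])
      show "YT tt (Suc K) a0 al N s = YT tt K a0 al (Step a c d N) (phi a (c N) (d N) s)" if "0 \<le> s" for s
        using key[OF N] that by auto
    qed
    have eq: "Ymap tt (Suc K) a0 al N = Ymap tt K a0 al (Step a c d N)" if N: "N \<in> nconf" for N
    proof -
      define M where "M = Step a c d N"
      have M: "M \<in> nconf" using key[OF N] unfolding M_def by simp
      have "Ymap tt (Suc K) a0 al N = YT tt (Suc K) a0 al N ` N"
        by (rule Ymap_image[OF ttK _ N nice[OF N]]) simp
      also have "\<dots> = (\<lambda>p. YT tt K a0 al M (phi a (c N) (d N) p)) ` N"
        using key[OF N] Npos[OF N] unfolding M_def by (intro image_cong) auto
      also have "\<dots> = YT tt K a0 al M ` M" unfolding M_def Step_def image_image ..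
      also have "\<dots> = Ymap tt K a0 al M"
        using Ymap_image[OF ttKk K1 M] IH M by auto
      finally show ?thesis unfolding M_def .
    qed
    obtain G where G: "InvP (Ymap tt K a0 al) G" using IH by blast
    have "InvP (\<lambda>N. Ymap tt K a0 al (Step a c d N)) (\<lambda>N. Step a (\<lambda>N. 1 / c N) (\<lambda>N. c N * d N) (G N))"
      by (rule InvP_comp[OF InvP_Step[OF ok] G])
    then have "InvP (Ymap tt (Suc K) a0 al) (\<lambda>N. Step a (\<lambda>N. 1 / c N) (\<lambda>N. c N * d N) (G N))"
      by (rule InvP_cong) (rule eq)
    then show ?thesis using nice by blast
  qed
qed

theorem mainTheorem13:
  fixes tt :: "nat \<Rightarrow> real" and k :: nat and T \<epsilon> a0 :: real
    and al :: "nat \<Rightarrow> real set \<Rightarrow> real"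
  assumes "1 \<le> k"
    and "tt 0 = 0" and "\<And>i. i < k \<Longrightarrow> tt i < tt (Suc i)" and "tt k = T"
    and "0 < \<epsilon>" and "\<epsilon> < 1"
    and "\<epsilon> \<le> a0" and "a0 \<le> 1 / \<epsilon>"
    and "\<And>j. 1 \<le> j \<Longrightarrow> j < k \<Longrightarrow> al j \<in> borel_measurable Nspace"
    and "\<And>j N. 1 \<le> j \<Longrightarrow> j < k \<Longrightarrow> N \<in> nconf \<Longrightarrow> \<epsilon> \<le> al j N \<and> al j N \<le> 1 / \<epsilon>"
  shows "invertible (Ymap tt k a0 al)"
proof -
  have tt: "ttok tt k" unfolding ttok_def using assms(2,3) by auto
  have "(\<forall>N\<in>nconf. NiceH (YT tt k a0 al N)) \<and> (\<exists>G. InvP (Ymap tt k a0 al) G)"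
    by (rule main_ind[OF tt assms(5,7,8,9,10) assms(1) order_refl])
  then obtain G where "InvP (Ymap tt k a0 al) G" by blast
  then show ?thesis by (rule invertible_InvP)
qed


end
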